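(* Let $\mu\in\rho(A_{22})$. For every $x_+\in\mathcal D^+$ the vector $y=(x_+,-F(\mu)x_+)^T$ lies in $\mathcal D(A)$ and $$(S(\mu)x_+,x_+)=(JAy,y)+\mu\,(F(\mu)x_+,F(\mu)x_+).$$ In particular, if $A$ is $J$-dissipative, then for every $\mu\in\mathbb C^-\cap\rho(A_{22})$ the operator $S(\mu)$ with domain $\mathcal D^+$ is dissipative in $\mathcal H^+$. Moreover, if $\mathcal D(A)$ is dense, $-A_{22}$ is m-dissipative in $\mathcal H^-$ and, for some $\mu\in\mathbb C^-$, $F(\mu)$ and $G(\mu)$ are bounded, then the closure of $S(\mu)$ is m-dissipative in $\mathcal H^+$ if and only if the closure of $A$ is $J$-m-dissipative.
   Context: $\mathcal H$ is a separable Hilbert space with complementary orthogonal projections $P_\pm$, $J=P_+-P_-$, $\mathcal H^\pm=P_\pm\mathcal H$, $[x,y]=(Jx,y)$; vectors are written as columns $(x_+,x_-)^T$. $A$ is a linear operator with domain $\mathcal D(A)=\mathcal D^+\oplus\mathcal D^-$, $\mathcal D^\pm\subset\mathcal H^\pm$, with $A_{11}=P_+A|_{\mathcal D^+}$, $A_{12}=P_+A|_{\mathcal D^-}$, $A_{21}=P_-A|_{\mathcal D^+}$, $A_{22}=P_-A|_{\mathcal D^-}$ ($A_{22}$ an operator in $\mathcal H^-$ with domain $\mathcal D^-$). For $\mu\in\rho(A_{22})$: $F(\mu)=(A_{22}-\mu)^{-1}A_{21}$ on $\mathcal D^+$, $G(\mu)=A_{12}(A_{22}-\mu)^{-1}$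 on $\mathcal H^-$, $S(\mu)=A_{11}-A_{12}F(\mu)$ on $\mathcal D^+$. An operator $T$ is dissipative if $\operatorname{Re}(Tx,x)\le0$ on $\mathcal D(T)$, m-dissipative if moreover it has no proper dissipative extension (equivalently $T-\lambda$ is boundedly invertible for $\operatorname{Re}\lambda>0$). $A$ is $J$-dissipative ($J$-m-dissipative) if $JA$ is dissipative (m-dissipative). $\mathbb C^-=\{\operatorname{Re}\mu<0\}$. *)

theory Defs
  imports "HOL-Analysis.Analysis"
begin

class complex_inner = real_normed_vector +
  fixes scaleC :: "complex \<Rightarrow> 'a \<Rightarrow> 'a"
    and cinner :: "'a \<Rightarrow> 'a \<Rightarrow> complex"
  assumes scaleC_add_right: "scaleC a (x + y) = scaleC a x + scaleC a y"
    and scaleC_add_left: "scaleC (a + b) x = scaleC a x + scaleC b x"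
    and scaleC_scaleC: "scaleC a (scaleC b x) = scaleC (a * b) x"
    and scaleC_one: "scaleC 1 x = x"
    and scaleR_scaleC: "scaleR r x = scaleC (complex_of_real r) x"
    and cinner_commute: "cinner x y = cnj (cinner y x)"
    and cinner_add_left: "cinner (x + y) z = cinner x z + cinner y z"
    and cinner_scaleC_left: "cinner (scaleC a x) y = a * cinner x y"
    and cinner_self_nonneg: "0 \<le> Re (cinner x x)"
    and cinner_self_eq_zero: "cinner x x = 0 \<longleftrightarrow> x = 0"
    and norm_eq_sqrt_cinner: "norm x = sqrt (Re (cinner x x))"

class chilbert_space = complex_inner + complete_space

instantiation complex :: complex_inner
begin
definition scaleC_complex :: "complex \<Rightarrow> complex \<Rightarrow> complex" where "scaleC_complex a x = a * x"
definition cinner_complex :: "complex \<Rightarrow> complex \<Rightarrow> complex" where "cinner_complex x y = x * cnj y"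
instance
proof
  fix a b :: complex and x y z :: complex and r :: real
  show "scaleC a (x + y) = scaleC a x + scaleC a y" by (simp add: scaleC_complex_def distrib_left)
  show "scaleC (a + b) x = scaleC a x + scaleC b x" by (simp add: scaleC_complex_def distrib_right)
  show "scaleC a (scaleC b x) = scaleC (a * b) x" by (simp add: scaleC_complex_def)
  show "scaleC 1 x = x" by (simp add: scaleC_complex_def)
  show "r *\<^sub>R x = scaleC (complex_of_real r) x" by (simp add: scaleC_complex_def scaleR_conv_of_real)
  show "cinner x y = cnj (cinner y x)" by (simp add: cinner_complex_def)
  show "cinner (x + y) z = cinner x z + cinner y z" by (simp add: cinner_complex_def distrib_right)
  show "cinner (scaleC a x) y = a * cinner x y" by (simp add: cinner_complex_def scaleC_complex_def)
  show "0 \<le> Re (cinner x x)" by (simp add: cinner_complex_def complex_mult_cnj)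
  show "cinner x x = 0 \<longleftrightarrow> x = 0" by (simp add: cinner_complex_def)
  show "norm x = sqrt (Re (cinner x x))" by (simp add: cinner_complex_def complex_mult_cnj cmod_def)
qed
end

instance complex :: chilbert_space ..

definition clinear_on :: "'a::complex_inner set \<Rightarrow> ('a \<Rightarrow> 'b::complex_inner) \<Rightarrow> bool" where
  "clinear_on D f \<longleftrightarrow> (\<forall>x\<in>D. \<forall>y\<in>D. f (x + y) = f x + f y) \<and>
                      (\<forall>c. \<forall>x\<in>D. f (scaleC c x) = scaleC c (f x))"

definition csubspace :: "'a::complex_inner set \<Rightarrow> bool" where
  "csubspace V \<longleftrightarrow> 0 \<in> V \<and> (\<forall>x\<in>V. \<forall>y\<in>V. x + y \<in> V) \<and> (\<forall>c. \<forall>x\<in>V. scaleC c x \<in> V)"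

definition orth_proj :: "('a::complex_inner \<Rightarrow> 'a) \<Rightarrow> bool" where
  "orth_proj P \<longleftrightarrow> clinear_on UNIV P \<and> (\<forall>x. P (P x) = P x) \<and>
                   (\<forall>x y. cinner (P x) y = cinner x (P y))"

text \<open>Operators (possibly after taking closures) are represented by their graphs.\<close>
definition graph :: "'a set \<Rightarrow> ('a \<Rightarrow> 'b) \<Rightarrow> ('a \<times> 'b) set" where
  "graph D f = {(x, f x) | x. x \<in> D}"

definition is_operator :: "('a::complex_inner \<times> 'a) set \<Rightarrow> bool" where
  "is_operator T \<longleftrightarrow> (0, 0) \<in> T \<and>
     (\<forall>p\<in>T. \<forall>q\<in>T. (fst p + fst q, snd p + snd q) \<in> T) \<and>
     (\<forall>c. \<forall>p\<in>T. (scaleC c (fst p), scaleC c (snd p)) \<in> T) \<and>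
     (\<forall>x y z. (x, y) \<in> T \<longrightarrow> (x, z) \<in> T \<longrightarrow> y = z)"

definition dissipative :: "('a::complex_inner \<times> 'a) set \<Rightarrow> bool" where
  "dissipative T \<longleftrightarrow> (\<forall>(x, y)\<in>T. Re (cinner y x) \<le> 0)"

definition m_dissipative_in :: "'a::complex_inner set \<Rightarrow> ('a \<times> 'a) set \<Rightarrow> bool" where
  "m_dissipative_in X T \<longleftrightarrow> T \<subseteq> X \<times> X \<and> is_operator T \<and> dissipative T \<and>
     (\<forall>T'. T \<subseteq> T' \<and> T' \<subseteq> X \<times> X \<and> is_operator T' \<and> dissipative T' \<longrightarrow> T' = T)"

definition resolvent_set :: "'a::complex_inner set \<Rightarrow> 'a set \<Rightarrow> ('a \<Rightarrow> 'a) \<Rightarrow> complex set" where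
  "resolvent_set X D T = {\<mu>. bij_betw (\<lambda>x. T x - scaleC \<mu> x) D X \<and>
      (\<exists>C. \<forall>y\<in>X. norm (inv_into D (\<lambda>x. T x - scaleC \<mu> x) y) \<le> C * norm y)}"

definition resolvent :: "'a::complex_inner set \<Rightarrow> ('a \<Rightarrow> 'a) \<Rightarrow> complex \<Rightarrow> 'a \<Rightarrow> 'a" where
  "resolvent D T \<mu> = inv_into D (\<lambda>x. T x - scaleC \<mu> x)"

end

theory Submission
  imports Defs
begin

lemma scaleC_zero_left[simp]: "scaleC 0 (x::'a::complex_inner) = 0"
proof -
  have "scaleC 0 x = scaleC 0 x + scaleC 0 x" using scaleC_add_left[of 0 0 x] by simp
  thus ?thesis by simp
qed

lemma scaleC_zero_right[simp]: "scaleC c (0::'a::complex_inner) = 0"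
proof -
  have "scaleC c 0 = scaleC c (0::'a) + scaleC c 0" using scaleC_add_right[of c 0 0] by simp
  thus ?thesis by simp
qed

lemma scaleC_minus_right: "scaleC c (- (x::'a::complex_inner)) = - scaleC c x"
proof -
  have "scaleC c (-x) + scaleC c x = 0" by (simp add: scaleC_add_right[symmetric])
  thus ?thesis by (simp add: eq_neg_iff_add_eq_0)
qed

lemma scaleC_diff_right: "scaleC c ((x::'a::complex_inner) - y) = scaleC c x - scaleC c y"
  using scaleC_add_right[of c x "-y"] by (simp add: scaleC_minus_right)

lemma scaleC_minus_left: "scaleC (- c) (x::'a::complex_inner) = - scaleC c x"
proof -
  have "scaleC (-c) x + scaleC c x = 0" by (simp add: scaleC_add_left[symmetric])
  thus ?thesis by (simp add: eq_neg_iff_add_eq_0)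
qed

lemma scaleC_diff_left: "scaleC (a - b) (x::'a::complex_inner) = scaleC a x - scaleC b x"
  using scaleC_add_left[of a "-b" x] by (simp add: scaleC_minus_left)

lemma scaleC_minus_one: "scaleC (-1) (x::'a::complex_inner) = - x"
  by (simp add: scaleC_minus_left scaleC_one)

lemma scaleC_of_real: "scaleC (complex_of_real r) (x::'a::complex_inner) = scaleR r x"
  by (simp add: scaleR_scaleC)

lemma cinner_add_right: "cinner (x::'a::complex_inner) (y + z) = cinner x y + cinner x z"
  by (metis cinner_commute cinner_add_left complex_cnj_add)

lemma cinner_scaleC_right: "cinner (x::'a::complex_inner) (scaleC a y) = cnj a * cinner x y"
  by (metis cinner_commute cinner_scaleC_left complex_cnj_mult)

lemma cinner_zero_left[simp]: "cinner 0 (y::'a::complex_inner) = 0"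
  using cinner_scaleC_left[of 0 "0::'a" y] by simp

lemma cinner_zero_right[simp]: "cinner (x::'a::complex_inner) 0 = 0"
  using cinner_scaleC_right[of x 0 "0::'a"] by simp

lemma cinner_minus_left: "cinner (- x) (y::'a::complex_inner) = - cinner x y"
  using cinner_scaleC_left[of "-1" x y] by (simp add: scaleC_minus_one)

lemma cinner_minus_right: "cinner x (- (y::'a::complex_inner)) = - cinner x y"
  using cinner_scaleC_right[of x "-1" y] by (simp add: scaleC_minus_one)

lemma cinner_diff_left: "cinner (x - y) (z::'a::complex_inner) = cinner x z - cinner y z"
  using cinner_add_left[of x "-y" z] by (simp add: cinner_minus_left)

lemma cinner_diff_right: "cinner x (y - (z::'a::complex_inner)) = cinner x y - cinner x z"
  using cinner_add_right[of x y "-z"] by (simp add: cinner_minus_right)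

lemmas cinner_simps = cinner_add_left cinner_add_right cinner_diff_left cinner_diff_right
  cinner_minus_left cinner_minus_right cinner_scaleC_left cinner_scaleC_right

lemma cinner_self_real: "cinner (x::'a::complex_inner) x = complex_of_real (Re (cinner x x))"
proof -
  have "cnj (cinner x x) = cinner x x" using cinner_commute[of x x] by simp
  thus ?thesis by (simp add: complex_eq_iff)
qed

lemma norm_sq_cinner: "(norm (x::'a::complex_inner))^2 = Re (cinner x x)"
  by (simp add: norm_eq_sqrt_cinner cinner_self_nonneg)

lemma cinner_self_norm: "cinner (x::'a::complex_inner) x = complex_of_real ((norm x)^2)"
  using cinner_self_real[of x] norm_sq_cinner[of x] by simp

lemma Re_cinner_swap: "Re (cinner (x::'a::complex_inner) y) = Re (cinner y x)"
  by (subst cinner_commute) simp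

lemma norm_diff_sq: "(norm ((x::'a::complex_inner) - y))^2 = (norm x)^2 - 2 * Re (cinner x y) + (norm y)^2"
  by (simp add: norm_sq_cinner cinner_simps Re_cinner_swap[of y x])

lemma norm_add_sq: "(norm ((x::'a::complex_inner) + y))^2 = (norm x)^2 + 2 * Re (cinner x y) + (norm y)^2"
  by (simp add: norm_sq_cinner cinner_simps Re_cinner_swap[of y x])

lemma norm_scaleC: "norm (scaleC c (x::'a::complex_inner)) = cmod c * norm x"
proof -
  have "cinner (scaleC c x) (scaleC c x) = (c * cnj c) * cinner x x"
    by (simp add: cinner_simps mult.assoc)
  also have "\<dots> = complex_of_real ((cmod c)^2 * (norm x)^2)"
    by (simp add: complex_norm_square[symmetric] cinner_self_norm)
  finally have "(norm (scaleC c x))^2 = (cmod c)^2 * (norm x)^2"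
    by (simp add: norm_sq_cinner)
  hence "(norm (scaleC c x))^2 = (cmod c * norm x)^2" by (simp add: power_mult_distrib)
  thus ?thesis by (simp add: power2_eq_iff_nonneg)
qed

lemma cauchy_schwarz: "cmod (cinner (x::'a::complex_inner) y) \<le> norm x * norm y"
proof (cases "y = 0")
  case True thus ?thesis by simp
next
  case False
  define a where "a = cinner x y"
  define t where "t = a / complex_of_real ((norm y)^2)"
  have ny: "norm y > 0" using False by simp
  define q where "q = (cmod a)^2 / (norm y)^2"
  have e1: "(norm (x - scaleC t y))^2 = (norm x)^2 - 2 * Re (cnj t * a) + (cmod t)^2 * (norm y)^2"
    by (simp add: norm_diff_sq cinner_simps norm_scaleC power_mult_distrib a_def)
  have "cnj t * a = complex_of_real q"
    unfolding t_def q_def by (simp add: complex_norm_square[symmetric] mult.commute)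
  hence e2: "Re (cnj t * a) = q" by simp
  have e3: "(cmod t)^2 * (norm y)^2 = q"
  proof -
    have "cmod t = cmod a / (norm y)^2" unfolding t_def by (simp add: norm_divide norm_power)
    thus ?thesis using ny unfolding q_def by (simp add: power_divide power2_eq_square)
  qed
  have "q \<le> (norm x)^2" using e1 e2 e3 zero_le_power2[of "norm (x - scaleC t y)"] by linarith
  hence "q * (norm y)^2 \<le> (norm x)^2 * (norm y)^2" by (rule mult_right_mono) simp
  moreover have "q * (norm y)^2 = (cmod a)^2" unfolding q_def using ny by simp
  ultimately have "(cmod a)^2 \<le> (norm x * norm y)^2" by (simp add: power_mult_distrib)
  hence "cmod a \<le> norm x * norm y" by (rule power2_le_imp_le) simp
  thus ?thesis unfolding a_def .
qed

lemma bounded_bilinear_cinner: "bounded_bilinear (cinner :: 'a::complex_inner \<Rightarrow> 'a \<Rightarrow> complex)"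
proof
  fix a a' b b' :: 'a and r :: real
  show "cinner (a + a') b = cinner a b + cinner a' b" by (rule cinner_add_left)
  show "cinner a (b + b') = cinner a b + cinner a b'" by (rule cinner_add_right)
  show "cinner (r *\<^sub>R a) b = r *\<^sub>R cinner a b"
    by (simp add: scaleR_scaleC cinner_scaleC_left scaleC_complex_def)
  show "cinner a (r *\<^sub>R b) = r *\<^sub>R cinner a b"
    by (simp add: scaleR_scaleC cinner_scaleC_right scaleC_complex_def)
next
  show "\<exists>K. \<forall>a b::'a. norm (cinner a b) \<le> norm a * norm b * K"
  proof (rule exI[of _ 1], intro allI)
    fix a b :: 'a
    show "cmod (cinner a b) \<le> norm a * norm b * 1" using cauchy_schwarz[of a b] by simp
  qed
qed

lemma bounded_linear_scaleC: "bounded_linear (scaleC c :: 'a::complex_inner \<Rightarrow> 'a)"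
proof
  fix x y :: 'a and r :: real
  show "scaleC c (x + y) = scaleC c x + scaleC c y" by (rule scaleC_add_right)
  show "scaleC c (r *\<^sub>R x) = r *\<^sub>R scaleC c x"
  proof -
    have "scaleC c (r *\<^sub>R x) = scaleC (c * complex_of_real r) x" by (simp add: scaleR_scaleC scaleC_scaleC)
    also have "\<dots> = scaleC (complex_of_real r * c) x" by (simp only: mult.commute)
    also have "\<dots> = r *\<^sub>R scaleC c x" by (simp add: scaleR_scaleC scaleC_scaleC)
    finally show ?thesis .
  qed
next
  show "\<exists>K. \<forall>x::'a. norm (scaleC c x) \<le> norm x * K"
  proof (rule exI[of _ "cmod c"], intro allI)
    fix x :: 'a
    show "norm (scaleC c x) \<le> norm x * cmod c" by (simp add: norm_scaleC mult.commute)
  qed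
qed

lemmas tendsto_cinner = bounded_bilinear.tendsto[OF bounded_bilinear_cinner]
lemmas tendsto_scaleC = bounded_linear.tendsto[OF bounded_linear_scaleC]

lemma csubspace_0: "csubspace V \<Longrightarrow> 0 \<in> V" unfolding csubspace_def by blast
lemma csubspace_add: "csubspace V \<Longrightarrow> x \<in> V \<Longrightarrow> y \<in> V \<Longrightarrow> x + y \<in> V"
  unfolding csubspace_def by blast
lemma csubspace_scaleC: "csubspace V \<Longrightarrow> x \<in> V \<Longrightarrow> scaleC c x \<in> V"
  unfolding csubspace_def by blast
lemma csubspace_minus: "csubspace V \<Longrightarrow> x \<in> V \<Longrightarrow> - x \<in> V"
  using csubspace_scaleC[of V x "-1"] by (simp add: scaleC_minus_one)
lemma csubspace_diff: "csubspace V \<Longrightarrow> x \<in> V \<Longrightarrow> y \<in> V \<Longrightarrow> x - y \<in> V"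
  using csubspace_add[of V x "-y"] csubspace_minus[of V y] by simp
lemma csubspace_scaleR: "csubspace V \<Longrightarrow> x \<in> V \<Longrightarrow> scaleR r x \<in> V"
  using csubspace_scaleC[of V x "complex_of_real r"] by (simp add: scaleR_scaleC)

lemma clinear_onD_add: "clinear_on D f \<Longrightarrow> x \<in> D \<Longrightarrow> y \<in> D \<Longrightarrow> f (x + y) = f x + f y"
  unfolding clinear_on_def by blast
lemma clinear_onD_scaleC: "clinear_on D f \<Longrightarrow> x \<in> D \<Longrightarrow> f (scaleC c x) = scaleC c (f x)"
  unfolding clinear_on_def by blast
lemma clinear_onD_minus: "clinear_on D f \<Longrightarrow> x \<in> D \<Longrightarrow> f (- x) = - f x"
  using clinear_onD_scaleC[of D f x "-1"] by (simp add: scaleC_minus_one)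
lemma clinear_onD_diff: "clinear_on D f \<Longrightarrow> csubspace D \<Longrightarrow> x \<in> D \<Longrightarrow> y \<in> D \<Longrightarrow> f (x - y) = f x - f y"
  using clinear_onD_add[of D f x "-y"] clinear_onD_minus[of D f y] csubspace_minus[of D y] by simp
lemma clinear_onD_zero: "clinear_on D f \<Longrightarrow> csubspace D \<Longrightarrow> f 0 = 0"
  using clinear_onD_scaleC[of D f 0 0] csubspace_0[of D] by simp

section \<open>Projections\<close>

lemma orth_proj_lin: "orth_proj P \<Longrightarrow> clinear_on UNIV P" unfolding orth_proj_def by blast
lemma orth_proj_add: "orth_proj P \<Longrightarrow> P (x + y) = P x + P y"
  using orth_proj_lin clinear_onD_add by blast
lemma orth_proj_scaleC: "orth_proj P \<Longrightarrow> P (scaleC c x) = scaleC c (P x)"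
  using orth_proj_lin clinear_onD_scaleC by blast
lemma csubspace_UNIV: "csubspace UNIV" unfolding csubspace_def by simp
lemma orth_proj_diff: "orth_proj P \<Longrightarrow> P (x - y) = P x - P y"
  using orth_proj_lin clinear_onD_diff csubspace_UNIV by blast
lemma orth_proj_minus: "orth_proj P \<Longrightarrow> P (- x) = - P x"
  using orth_proj_lin clinear_onD_minus by blast
lemma orth_proj_zero: "orth_proj P \<Longrightarrow> P 0 = 0"
  using orth_proj_lin clinear_onD_zero csubspace_UNIV by blast
lemma orth_proj_idem: "orth_proj P \<Longrightarrow> P (P x) = P x" unfolding orth_proj_def by blast
lemma orth_proj_sa: "orth_proj P \<Longrightarrow> cinner (P x) y = cinner x (P y)" unfolding orth_proj_def by blast

lemma orth_proj_norm_sq: "orth_proj P \<Longrightarrow> (norm (P x))^2 = Re (cinner (P x) x)"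
  by (simp add: norm_sq_cinner orth_proj_sa orth_proj_idem)

lemma orth_proj_norm: assumes "orth_proj P" shows "norm (P x) \<le> norm x"
proof -
  have "(norm (P x))^2 \<le> norm (P x) * norm x"
    using orth_proj_norm_sq[OF assms, of x] cauchy_schwarz[of "P x" x] complex_Re_le_cmod[of "cinner (P x) x"]
    by linarith
  hence "norm (P x) * norm (P x) \<le> norm (P x) * norm x" by (simp add: power2_eq_square)
  thus ?thesis
    by (cases "norm (P x) = 0") (simp_all add: mult_le_cancel_left)
qed

lemma orth_proj_bounded_linear: assumes "orth_proj P" shows "bounded_linear P"
proof
  fix x y :: 'a and r :: real
  show "P (x + y) = P x + P y" by (rule orth_proj_add[OF assms])
  show "P (r *\<^sub>R x) = r *\<^sub>R P x" by (simp add: scaleR_scaleC orth_proj_scaleC[OF assms])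
next
  show "\<exists>K. \<forall>x. norm (P x) \<le> norm x * K"
    by (rule exI[of _ 1]) (simp add: orth_proj_norm[OF assms])
qed

lemma orth_proj_tendsto: "orth_proj P \<Longrightarrow> (f \<longlongrightarrow> a) F \<Longrightarrow> ((\<lambda>n. P (f n)) \<longlongrightarrow> P a) F"
  using bounded_linear.tendsto[OF orth_proj_bounded_linear] by blast

lemma orth_proj_range: "orth_proj P \<Longrightarrow> x \<in> range P \<longleftrightarrow> P x = x"
  using orth_proj_idem by (metis rangeE rangeI)

lemma orth_proj_range_closed: assumes "orth_proj P" shows "closed (range P)"
proof -
  have "range P = {x. P x = x}" using orth_proj_range[OF assms] by blast
  moreover have "closed {x. P x = x}"
    by (rule closed_Collect_eq) (auto intro: bounded_linear.continuous_on[OF orth_proj_bounded_linear[OF assms]] continuous_on_id)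
  ultimately show ?thesis by simp
qed

lemma orth_proj_range_csubspace: assumes "orth_proj P" shows "csubspace (range P)"
  unfolding csubspace_def
proof (intro conjI ballI allI)
  show "0 \<in> range P" using orth_proj_zero[OF assms] by (metis rangeI)
  fix x y assume "x \<in> range P" "y \<in> range P"
  thus "x + y \<in> range P" using orth_proj_add[OF assms] orth_proj_range[OF assms] by metis
next
  fix c x assume "x \<in> range P"
  thus "scaleC c x \<in> range P" using orth_proj_scaleC[OF assms] orth_proj_range[OF assms] by metis
qed

lemma compl_PQ: assumes "orth_proj P" "\<forall>x. P x + Q x = x" shows "P (Q x) = 0"
proof -
  have "Q x = x - P x" using assms(2) by (metis add_diff_cancel_left')
  hence "P (Q x) = P x - P (P x)" using orth_proj_diff[OF assms(1)] by simp
  thus ?thesis using orth_proj_idem[OF assms(1)] by simp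
qed

lemma compl_orth: assumes "orth_proj P" "\<forall>x. P x + Q x = x" "orth_proj Q"
  shows "cinner (Q x) (P y) = 0"
  using orth_proj_sa[OF assms(3), of x "P y"] compl_PQ[of Q P]
  by (metis add.commute assms cinner_zero_right)

lemma projection_theorem:
  fixes M :: "'a::chilbert_space set"
  assumes cl: "closed M" and sub: "csubspace M" and w: "w \<notin> M"
  shows "\<exists>m0\<in>M. w - m0 \<noteq> 0 \<and> (\<forall>m\<in>M. cinner m (w - m0) = 0)"
proof -
  define V where "V = (\<lambda>m. (norm (w - m))^2) ` M"
  define D where "D = Inf V"
  have ne: "V \<noteq> {}" using csubspace_0[OF sub] unfolding V_def by blast
  have bdd: "bdd_below V" unfolding V_def by (rule bdd_belowI[of _ 0]) auto
  have lower: "D \<le> (norm (w - m))^2" if "m \<in> M" for m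
    unfolding D_def V_def using bdd that by (auto intro: cInf_lower simp: V_def)
  have "\<exists>m\<in>M. (norm (w - m))^2 < D + inverse (real (Suc n))" for n
  proof -
    have "Inf V < D + inverse (real (Suc n))" unfolding D_def by simp
    then obtain v where "v \<in> V" "v < D + inverse (real (Suc n))"
      using cInf_less_iff[OF ne bdd] by blast
    thus ?thesis unfolding V_def by blast
  qed
  then obtain s where sM: "\<And>n. s n \<in> M" and sD: "\<And>n. (norm (w - s n))^2 < D + inverse (real (Suc n))"
    by metis
  have par: "(norm (s n - s k))^2 \<le> 2 * inverse (real (Suc n)) + 2 * inverse (real (Suc k))" for n k
  proof -
    define a where "a = w - s n"
    define b where "b = w - s k"
    have pl: "(norm (a + b))^2 + (norm (a - b))^2 = 2 * (norm a)^2 + 2 * (norm b)^2"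
      by (simp add: norm_add_sq norm_diff_sq)
    define mid where "mid = scaleR (1/2) (s n + s k)"
    have midM: "mid \<in> M" unfolding mid_def using sM sub by (intro csubspace_scaleR csubspace_add) auto
    have "a + b = scaleR 2 (w - mid)" unfolding a_def b_def mid_def by (simp add: algebra_simps scaleR_2)
    hence "(norm (a + b))^2 = 4 * (norm (w - mid))^2" by (simp add: power_mult_distrib)
    hence "(norm (a + b))^2 \<ge> 4 * D" using lower[OF midM] by simp
    moreover have "a - b = s k - s n" unfolding a_def b_def by simp
    hence "(norm (a - b))^2 = (norm (s n - s k))^2" using norm_minus_commute[of "s k" "s n"] by simp
    ultimately show ?thesis using pl sD[of n] sD[of k] unfolding a_def b_def by linarith
  qed
  have "Cauchy s"
  proof (rule metric_CauchyI)
    fix e :: real assume e: "e > 0"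
    obtain N :: nat where N: "inverse (real (Suc N)) < e^2 / 4"
      using reals_Archimedean[of "e^2/4"] e by auto
    show "\<exists>M. \<forall>m\<ge>M. \<forall>n\<ge>M. dist (s m) (s n) < e"
    proof (intro exI allI impI)
      fix m n assume mn: "N \<le> m" "N \<le> n"
      have "inverse (real (Suc m)) \<le> inverse (real (Suc N))" using mn by (simp add: le_imp_inverse_le)
      moreover have "inverse (real (Suc n)) \<le> inverse (real (Suc N))" using mn by (simp add: le_imp_inverse_le)
      ultimately have "(norm (s m - s n))^2 < e^2" using par[of m n] N by linarith
      hence "norm (s m - s n) < e" using e by (simp add: power_less_imp_less_base)
      thus "dist (s m) (s n) < e" by (simp add: dist_norm)
    qed
  qed
  then obtain m0 where lim: "s \<longlonglongrightarrow> m0" using Cauchy_convergent_iff convergent_def by blast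
  have m0M: "m0 \<in> M" using closed_sequentially[OF cl] sM lim by blast
  define z where "z = w - m0"
  have "(\<lambda>n. (norm (w - s n))^2) \<longlonglongrightarrow> (norm z)^2"
    unfolding z_def by (intro tendsto_intros lim)
  moreover have "(\<lambda>n. D + inverse (real (Suc n))) \<longlonglongrightarrow> D + 0"
    by (intro tendsto_intros LIMSEQ_inverse_real_of_nat)
  ultimately have zD: "(norm z)^2 \<le> D"
    using LIMSEQ_le[of "\<lambda>n. (norm (w - s n))^2" _ "\<lambda>n. D + inverse (real (Suc n))" D] sD
    by (simp add: less_imp_le)
  have z0: "z \<noteq> 0" using w m0M unfolding z_def by auto
  have orth: "cinner m z = 0" if mM: "m \<in> M" for m
  proof -
    define a where "a = cinner z m"
    define t where "t = 1 / ((norm m)^2 + 1)"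
    have t0: "t > 0" unfolding t_def by (simp add: add_nonneg_pos)
    define c where "c = complex_of_real t * a"
    have "m0 + scaleC c m \<in> M" using m0M mM sub by (intro csubspace_add csubspace_scaleC)
    hence "D \<le> (norm (w - (m0 + scaleC c m)))^2" by (rule lower)
    also have "w - (m0 + scaleC c m) = z - scaleC c m" unfolding z_def by simp
    also have "(norm (z - scaleC c m))^2 = (norm z)^2 - 2 * Re (cinner z (scaleC c m)) + (norm (scaleC c m))^2"
      by (rule norm_diff_sq)
    also have "cinner z (scaleC c m) = complex_of_real (t * (cmod a)^2)"
      unfolding c_def by (simp add: cinner_scaleC_right a_def complex_norm_square[symmetric] mult.commute)
    also have "(norm (scaleC c m))^2 = t^2 * (cmod a)^2 * (norm m)^2"
      unfolding c_def by (simp add: norm_scaleC norm_mult power_mult_distrib abs_of_pos[OF t0])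
    finally have "2 * (t * (cmod a)^2) \<le> t^2 * (cmod a)^2 * (norm m)^2" using zD by simp
    hence "t * (2 * (cmod a)^2) \<le> t * (t * (norm m)^2 * (cmod a)^2)"
      by (simp add: power2_eq_square mult_ac)
    hence "2 * (cmod a)^2 \<le> t * (norm m)^2 * (cmod a)^2" using t0
      by (rule mult_left_le_imp_le)
    moreover have "t * (norm m)^2 \<le> 1"
    proof -
      have "(norm m)^2 \<le> 1 * ((norm m)^2 + 1)" by simp
      thus ?thesis unfolding t_def by (simp add: divide_le_eq add_nonneg_pos)
    qed
    hence "t * (norm m)^2 * (cmod a)^2 \<le> 1 * (cmod a)^2" by (rule mult_right_mono) simp
    ultimately have "(cmod a)^2 \<le> 0" by linarith
    hence "a = 0" by simp
    thus ?thesis unfolding a_def by (subst cinner_commute) simp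
  qed
  show ?thesis using m0M z0 orth unfolding z_def by blast
qed

lemma is_operatorD:
  assumes "is_operator T"
  shows "(0, 0) \<in> T"
    and "(x, y) \<in> T \<Longrightarrow> (u, v) \<in> T \<Longrightarrow> (x + u, y + v) \<in> T"
    and "(x, y) \<in> T \<Longrightarrow> (scaleC c x, scaleC c y) \<in> T"
    and "(x, y) \<in> T \<Longrightarrow> (x, z) \<in> T \<Longrightarrow> y = z"
proof -
  show "(0, 0) \<in> T" using assms unfolding is_operator_def by blast
  show "(x, y) \<in> T \<Longrightarrow> (u, v) \<in> T \<Longrightarrow> (x + u, y + v) \<in> T"
    using assms unfolding is_operator_def by (metis fst_conv snd_conv)
  show "(x, y) \<in> T \<Longrightarrow> (scaleC c x, scaleC c y) \<in> T"
    using assms unfolding is_operator_def by (metis fst_conv snd_conv)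
  show "(x, y) \<in> T \<Longrightarrow> (x, z) \<in> T \<Longrightarrow> y = z"
    using assms unfolding is_operator_def by blast
qed

lemma is_operator_diff:
  assumes "is_operator T" "(x, y) \<in> T" "(u, v) \<in> T"
  shows "(x - u, y - v) \<in> T"
proof -
  have "(scaleC (-1) u, scaleC (-1) v) \<in> T" using is_operatorD(3)[OF assms(1) assms(3)] .
  hence "(- u, - v) \<in> T" by (simp add: scaleC_minus_one)
  from is_operatorD(2)[OF assms(1) assms(2) this] show ?thesis by simp
qed

lemma dissipativeD: "dissipative T \<Longrightarrow> (x, y) \<in> T \<Longrightarrow> Re (cinner y x) \<le> 0"
  unfolding dissipative_def by auto

lemma graph_iff: "(x, y) \<in> graph D f \<longleftrightarrow> x \<in> D \<and> y = f x"
  unfolding graph_def by auto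

lemma fst_graph: "fst ` graph D f = D"
proof
  show "fst ` graph D f \<subseteq> D" unfolding graph_def by auto
  show "D \<subseteq> fst ` graph D f"
  proof
    fix x assume "x \<in> D"
    hence "(x, f x) \<in> graph D f" unfolding graph_iff by simp
    thus "x \<in> fst ` graph D f" by (metis fst_conv image_eqI)
  qed
qed

lemma is_operator_graph:
  assumes D: "csubspace D" and f: "clinear_on D f"
  shows "is_operator (graph D f)"
  unfolding is_operator_def
proof (intro conjI ballI allI impI)
  show "(0, 0) \<in> graph D f" unfolding graph_iff using csubspace_0[OF D] clinear_onD_zero[OF f D] by simp
next
  fix p q assume "p \<in> graph D f" "q \<in> graph D f"
  hence "fst p \<in> D" "snd p = f (fst p)" "fst q \<in> D" "snd q = f (fst q)"
    unfolding graph_def by auto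
  thus "(fst p + fst q, snd p + snd q) \<in> graph D f"
    unfolding graph_iff using csubspace_add[OF D] clinear_onD_add[OF f] by simp
next
  fix c p assume "p \<in> graph D f"
  hence "fst p \<in> D" "snd p = f (fst p)" unfolding graph_def by auto
  thus "(scaleC c (fst p), scaleC c (snd p)) \<in> graph D f"
    unfolding graph_iff using csubspace_scaleC[OF D] clinear_onD_scaleC[OF f] by simp
next
  fix x y z assume "(x, y) \<in> graph D f" "(x, z) \<in> graph D f"
  thus "y = z" unfolding graph_iff by simp
qed

lemma lower_bound:
  fixes x y :: "'a::complex_inner"
  assumes "Re (cinner y x) \<le> 0" "Re l > 0"
  shows "Re l * norm x \<le> norm (y - scaleC l x)"
proof -
  have "Re (cinner (y - scaleC l x) x) = Re (cinner y x) - Re l * (norm x)^2"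
    by (simp add: cinner_simps cinner_self_norm)
  hence "Re l * (norm x)^2 \<le> - Re (cinner (y - scaleC l x) x)" using assms by linarith
  also have "\<dots> \<le> cmod (cinner (y - scaleC l x) x)"
    using abs_Re_le_cmod[of "cinner (y - scaleC l x) x"] by linarith
  also have "\<dots> \<le> norm (y - scaleC l x) * norm x" by (rule cauchy_schwarz)
  finally have nx: "norm x * (Re l * norm x) \<le> norm x * norm (y - scaleC l x)"
    by (simp add: power2_eq_square mult_ac)
  show ?thesis
  proof (cases "norm x = 0")
    case True thus ?thesis by simp
  next
    case False
    hence "norm x > 0" by simp
    from mult_left_le_imp_le[OF \<open>norm x * _ \<le> _\<close> this] show ?thesis .
  qed
qed

lemma cauchy_lb:
  fixes p :: "nat \<Rightarrow> 'a::chilbert_space \<times> 'a"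
  assumes op: "is_operator T" and diss: "dissipative T" and l: "Re l > 0"
    and pT: "\<And>n. p n \<in> T"
    and lim: "(\<lambda>n. snd (p n) - scaleC l (fst (p n))) \<longlonglongrightarrow> w"
  shows "\<exists>x. p \<longlonglongrightarrow> (x, w + scaleC l x)"
proof -
  define r where "r = (\<lambda>n. snd (p n) - scaleC l (fst (p n)))"
  have Cr: "Cauchy r" using LIMSEQ_imp_Cauchy lim unfolding r_def by blast
  have bd: "Re l * norm (fst (p n) - fst (p k)) \<le> norm (r n - r k)" for n k
  proof -
    have "(fst (p n) - fst (p k), snd (p n) - snd (p k)) \<in> T"
      using is_operator_diff[OF op, of "fst (p n)" "snd (p n)" "fst (p k)" "snd (p k)"] pT by simp
    hence "Re (cinner (snd (p n) - snd (p k)) (fst (p n) - fst (p k))) \<le> 0"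
      by (rule dissipativeD[OF diss])
    have e: "snd (p n) - snd (p k) - scaleC l (fst (p n) - fst (p k)) = r n - r k"
      unfolding r_def by (simp add: scaleC_diff_right)
    from lower_bound[OF \<open>Re _ \<le> 0\<close> l] show ?thesis unfolding e .
  qed
  have "Cauchy (\<lambda>n. fst (p n))"
  proof (rule metric_CauchyI)
    fix e :: real assume e: "e > 0"
    then have "Re l * e > 0" using l by simp
    then obtain M where M: "\<forall>m\<ge>M. \<forall>n\<ge>M. dist (r m) (r n) < Re l * e"
      using Cr unfolding Cauchy_def by blast
    show "\<exists>M. \<forall>m\<ge>M. \<forall>n\<ge>M. dist (fst (p m)) (fst (p n)) < e"
    proof (intro exI allI impI)
      fix m n assume "M \<le> m" "M \<le> n"
      hence "norm (r m - r n) < Re l * e" using M by (simp add: dist_norm)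
      hence "Re l * norm (fst (p m) - fst (p n)) < Re l * e" using bd[of m n] by linarith
      hence "norm (fst (p m) - fst (p n)) < e" using l by simp
      thus "dist (fst (p m)) (fst (p n)) < e" by (simp add: dist_norm)
    qed
  qed
  then obtain x where x: "(\<lambda>n. fst (p n)) \<longlonglongrightarrow> x"
    using Cauchy_convergent_iff convergent_def by blast
  have "(\<lambda>n. r n + scaleC l (fst (p n))) \<longlonglongrightarrow> w + scaleC l x"
    using tendsto_add[OF lim tendsto_scaleC[OF x]] unfolding r_def .
  hence y: "(\<lambda>n. snd (p n)) \<longlonglongrightarrow> w + scaleC l x" unfolding r_def by simp
  have "(\<lambda>n. (fst (p n), snd (p n))) \<longlonglongrightarrow> (x, w + scaleC l x)"
    by (rule tendsto_Pair[OF x y])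
  moreover have "(\<lambda>n. (fst (p n), snd (p n))) = p" by simp
  ultimately show ?thesis by metis
qed

section \<open>Closure of dissipative operators\<close>

lemma closure_op:
  fixes T :: "('a::chilbert_space \<times> 'a) set"
  assumes op: "is_operator T" and diss: "dissipative T" and sub: "T \<subseteq> X \<times> X"
    and cl: "closed X" and dense: "X \<subseteq> closure (fst ` T)"
  shows "is_operator (closure T)" "dissipative (closure T)" "closure T \<subseteq> X \<times> X"
proof -
  show csub: "closure T \<subseteq> X \<times> X"
    by (rule closure_minimal[OF sub closed_Times[OF cl cl]])
  have add: "p + q \<in> closure T" if P: "p \<in> closure T" and Q: "q \<in> closure T" for p q
  proof -
    from P obtain a where a: "\<And>n. a n \<in> T" "a \<longlonglongrightarrow> p" unfolding closure_sequential by blast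
    from Q obtain b where b: "\<And>n. b n \<in> T" "b \<longlonglongrightarrow> q" unfolding closure_sequential by blast
    have "a n + b n \<in> T" for n
    proof -
      have "(fst (a n) + fst (b n), snd (a n) + snd (b n)) \<in> T"
        using is_operatorD(2)[OF op, of "fst (a n)" "snd (a n)" "fst (b n)" "snd (b n)"] a(1)[of n] b(1)[of n]
        by simp
      thus ?thesis by (simp add: plus_prod_def)
    qed
    moreover have "(\<lambda>n. a n + b n) \<longlonglongrightarrow> p + q" using a(2) b(2) by (rule tendsto_add)
    ultimately show ?thesis unfolding closure_sequential by (intro exI[of _ "\<lambda>n. a n + b n"]) simp
  qed
  have scl: "(scaleC c (fst p), scaleC c (snd p)) \<in> closure T" if P: "p \<in> closure T" for p c
  proof -
    from P obtain a where a: "\<And>n. a n \<in> T" "a \<longlonglongrightarrow> p" unfolding closure_sequential by blast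
    have "\<And>n. (scaleC c (fst (a n)), scaleC c (snd (a n))) \<in> T"
      using is_operatorD(3)[OF op, of "fst (a _)" "snd (a _)"] a(1) by simp
    moreover have "(\<lambda>n. (scaleC c (fst (a n)), scaleC c (snd (a n)))) \<longlonglongrightarrow> (scaleC c (fst p), scaleC c (snd p))"
      using a(2) by (intro tendsto_Pair tendsto_scaleC tendsto_fst tendsto_snd)
    ultimately show ?thesis unfolding closure_sequential
      by (intro exI[of _ "\<lambda>n. (scaleC c (fst (a n)), scaleC c (snd (a n)))"]) simp
  qed
  show dc: "dissipative (closure T)"
    unfolding dissipative_def
  proof (clarify)
    fix x y assume "(x, y) \<in> closure T"
    then obtain a where a: "\<And>n. a n \<in> T" "a \<longlonglongrightarrow> (x, y)" unfolding closure_sequential by blast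
    have "(\<lambda>n. Re (cinner (snd (a n)) (fst (a n)))) \<longlonglongrightarrow> Re (cinner (snd (x, y)) (fst (x, y)))"
      using a(2) by (intro tendsto_Re tendsto_cinner tendsto_fst tendsto_snd)
    moreover have "\<forall>n. Re (cinner (snd (a n)) (fst (a n))) \<le> 0"
    proof
      fix n
      have "(fst (a n), snd (a n)) \<in> T" using a(1)[of n] by simp
      thus "Re (cinner (snd (a n)) (fst (a n))) \<le> 0" by (rule dissipativeD[OF diss])
    qed
    ultimately show "Re (cinner y x) \<le> 0" using LIMSEQ_le_const2 by fastforce
  qed
  have zero: "v = 0" if v: "(0, v) \<in> closure T" for v
  proof -
    have orth: "cinner v u = 0" if uT: "(u, u') \<in> T" for u u'
    proof -
      define a where "a = cinner v u"
      define K where "K = Re (cinner u' u)"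
      define t where "t = 1 / (\<bar>K\<bar> + 1)"
      have t0: "t > 0" unfolding t_def by (simp add: add_nonneg_pos)
      define c where "c = complex_of_real t * a"
      have "(scaleC c u, scaleC c u') \<in> closure T"
        using is_operatorD(3)[OF op uT] closure_subset by blast
      from add[OF v this] have "(scaleC c u, v + scaleC c u') \<in> closure T" by simp
      hence R: "Re (cinner (v + scaleC c u') (scaleC c u)) \<le> 0" by (rule dissipativeD[OF dc])
      have na: "cnj a * a = complex_of_real ((cmod a)^2)"
        using complex_norm_square[of a] by (simp add: mult.commute)
      have e1: "cinner (v + scaleC c u') (scaleC c u) = cnj c * a + (c * cnj c) * cinner u' u"
        by (simp add: cinner_simps a_def algebra_simps)
      have e2: "cnj c * a = complex_of_real (t * (cmod a)^2)"
      proof -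
        have "cnj c * a = complex_of_real t * (cnj a * a)" unfolding c_def by (simp add: mult_ac)
        also have "\<dots> = complex_of_real (t * (cmod a)^2)" unfolding na by simp
        finally show ?thesis .
      qed
      have e3: "c * cnj c = complex_of_real (t^2 * (cmod a)^2)"
      proof -
        have "c * cnj c = complex_of_real t * complex_of_real t * (cnj a * a)" unfolding c_def by (simp add: mult_ac)
        also have "\<dots> = complex_of_real (t^2 * (cmod a)^2)" unfolding na by (simp add: power2_eq_square)
        finally show ?thesis .
      qed
      have "Re (cinner (v + scaleC c u') (scaleC c u)) = t * (cmod a)^2 + t^2 * (cmod a)^2 * K"
        unfolding e1 e2 e3 K_def by simp
      hence "t * (cmod a)^2 + t^2 * (cmod a)^2 * K \<le> 0" using R by simp
      hence "t * ((cmod a)^2 * (1 + t * K)) \<le> t * 0" by (simp add: algebra_simps power2_eq_square)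
      hence A: "(cmod a)^2 * (1 + t * K) \<le> 0" using t0 by (rule mult_left_le_imp_le)
      have "t * \<bar>K\<bar> = \<bar>K\<bar> / (\<bar>K\<bar> + 1)" unfolding t_def by simp
      moreover have "\<bar>K\<bar> / (\<bar>K\<bar> + 1) < 1"
      proof -
        have p: "0 < \<bar>K\<bar> + 1" by linarith
        have "\<bar>K\<bar> < 1 * (\<bar>K\<bar> + 1)" by simp
        thus ?thesis using pos_divide_less_eq[OF p] by blast
      qed
      moreover have "t * (- \<bar>K\<bar>) \<le> t * K"
        by (rule mult_left_mono[OF _ less_imp_le[OF t0]]) linarith
      ultimately have pos: "1 + t * K > 0" by linarith
      have "(cmod a)^2 \<le> 0"
      proof (rule ccontr)
        assume "\<not> (cmod a)^2 \<le> 0"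
        hence "(cmod a)^2 > 0" by simp
        from mult_pos_pos[OF this pos] A show False by linarith
      qed
      thus ?thesis unfolding a_def by simp
    qed
    have "closed {u. cinner v u = 0}"
      by (rule closed_Collect_eq)
        (auto intro: bounded_linear.continuous_on[OF bounded_bilinear.bounded_linear_right[OF bounded_bilinear_cinner]] continuous_on_id)
    moreover have "fst ` T \<subseteq> {u. cinner v u = 0}" using orth by force
    ultimately have "closure (fst ` T) \<subseteq> {u. cinner v u = 0}" by (rule closure_minimal[rotated])
    moreover have "v \<in> X" using csub v by blast
    ultimately have "cinner v v = 0" using dense by blast
    thus "v = 0" using cinner_self_eq_zero by blast
  qed
  show "is_operator (closure T)"
    unfolding is_operator_def
  proof (intro conjI ballI allI impI)
    show "(0, 0) \<in> closure T" using is_operatorD(1)[OF op] closure_subset by blast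
    fix p q assume "p \<in> closure T" "q \<in> closure T"
    thus "(fst p + fst q, snd p + snd q) \<in> closure T" using add by (simp add: plus_prod_def)
  next
    fix c p assume "p \<in> closure T"
    thus "(scaleC c (fst p), scaleC c (snd p)) \<in> closure T" by (rule scl)
  next
    fix x y z assume xy: "(x, y) \<in> closure T" and xz: "(x, z) \<in> closure T"
    have "(scaleC (-1) x, scaleC (-1) z) \<in> closure T" using scl[OF xz, of "-1"] by simp
    hence "(- x, - z) \<in> closure T" by (simp add: scaleC_minus_one)
    from add[OF xy this] have "(0, y - z) \<in> closure T" by simp
    from zero[OF this] show "y = z" by simp
  qed
qed

lemmas scaleC_simps = scaleC_add_right scaleC_add_left scaleC_scaleC scaleC_diff_right
  scaleC_diff_left scaleC_one scaleC_minus_right scaleC_minus_left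

lemma maximal_range:
  fixes T :: "('a::chilbert_space \<times> 'a) set"
  assumes m: "m_dissipative_in X T" and cl: "closed X" and sub: "csubspace X"
    and dense: "X \<subseteq> closure (fst ` T)" and l: "Re l > 0" and w: "w \<in> X"
  shows "\<exists>x y. (x, y) \<in> T \<and> y - scaleC l x = w"
proof -
  have TX: "T \<subseteq> X \<times> X" and op: "is_operator T" and diss: "dissipative T"
    using m unfolding m_dissipative_in_def by blast+
  have max: "T' = T" if "T \<subseteq> T'" "T' \<subseteq> X \<times> X" "is_operator T'" "dissipative T'" for T'
    using m that unfolding m_dissipative_in_def by blast
  have clT: "closure T = T"
    using max[OF closure_subset closure_op(3)[OF op diss TX cl dense]
        closure_op(1)[OF op diss TX cl dense] closure_op(2)[OF op diss TX cl dense]] .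
  define R where "R = {y - scaleC l x | x y. (x, y) \<in> T}"
  have Rsub: "csubspace R"
    unfolding csubspace_def
  proof (intro conjI ballI allI)
    have "(0::'a) = 0 - scaleC l 0 \<and> (0, 0) \<in> T" using is_operatorD(1)[OF op] by simp
    thus "0 \<in> R" unfolding R_def by blast
  next
    fix a b assume "a \<in> R" "b \<in> R"
    then obtain x1 y1 x2 y2 where "(x1, y1) \<in> T" "a = y1 - scaleC l x1" "(x2, y2) \<in> T" "b = y2 - scaleC l x2"
      unfolding R_def by blast
    moreover have "a + b = (y1 + y2) - scaleC l (x1 + x2)" using calculation by (simp add: scaleC_add_right)
    ultimately show "a + b \<in> R" unfolding R_def using is_operatorD(2)[OF op] by blast
  next
    fix c a assume "a \<in> R"
    then obtain x y where "(x, y) \<in> T" "a = y - scaleC l x" unfolding R_def by blast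
    moreover have "scaleC c a = scaleC c y - scaleC l (scaleC c x)"
      using calculation by (simp add: scaleC_diff_right scaleC_scaleC mult.commute)
    ultimately show "scaleC c a \<in> R" unfolding R_def using is_operatorD(3)[OF op] by blast
  qed
  have RX: "R \<subseteq> X"
  proof
    fix a assume "a \<in> R"
    then obtain x y where "(x, y) \<in> T" "a = y - scaleC l x" unfolding R_def by blast
    thus "a \<in> X" using TX sub by (auto intro: csubspace_diff csubspace_scaleC)
  qed
  have Rcl: "closed R"
    unfolding closed_sequential_limits
  proof (intro allI impI)
    fix r w' assume A: "(\<forall>n. r n \<in> R) \<and> r \<longlonglongrightarrow> w'"
    define p where "p n = (SOME q. q \<in> T \<and> r n = snd q - scaleC l (fst q))" for n
    have p: "p n \<in> T \<and> r n = snd (p n) - scaleC l (fst (p n))" for n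
    proof -
      have "\<exists>q. q \<in> T \<and> r n = snd q - scaleC l (fst q)" using A unfolding R_def by force
      thus ?thesis unfolding p_def by (rule someI_ex)
    qed
    have req: "(\<lambda>n. snd (p n) - scaleC l (fst (p n))) = r" using p by (intro ext) simp
    have "(\<lambda>n. snd (p n) - scaleC l (fst (p n))) \<longlonglongrightarrow> w'" unfolding req using A by simp
    from cauchy_lb[OF op diss l _ this] p obtain x where "p \<longlonglongrightarrow> (x, w' + scaleC l x)" by blast
    hence "(x, w' + scaleC l x) \<in> closure T" unfolding closure_sequential using p by blast
    hence "(x, w' + scaleC l x) \<in> T" using clT by simp
    thus "w' \<in> R" unfolding R_def by force
  qed
  show ?thesis
  proof (rule ccontr)
    assume nex: "\<not> ?thesis"
    hence wR: "w \<notin> R" unfolding R_def by blast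
    from projection_theorem[OF Rcl Rsub wR] obtain m0 where
      m0: "m0 \<in> R" "w - m0 \<noteq> 0" "\<forall>m\<in>R. cinner m (w - m0) = 0" by blast
    define z where "z = w - m0"
    have z0: "z \<noteq> 0" using m0 unfolding z_def by simp
    have zX: "z \<in> X" unfolding z_def using w m0(1) RX sub by (auto intro: csubspace_diff)
    have key: "cinner y z = l * cinner x z" if "(x, y) \<in> T" for x y
    proof -
      have "y - scaleC l x \<in> R" unfolding R_def using that by blast
      hence "cinner (y - scaleC l x) z = 0" using m0(3) unfolding z_def by blast
      thus ?thesis by (simp add: cinner_simps)
    qed
    have znot: "(z, y) \<notin> T" for y
    proof
      assume zy: "(z, y) \<in> T"
      have "cinner y z = l * complex_of_real ((norm z)^2)" using key[OF zy] by (simp add: cinner_self_norm)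
      hence "Re (cinner y z) = Re l * (norm z)^2" by simp
      moreover have "(norm z)^2 > 0" using z0 by simp
      ultimately have "Re (cinner y z) > 0" using l by simp
      thus False using dissipativeD[OF diss zy] by simp
    qed
    define T' where "T' = {(x + scaleC c z, y - scaleC (c * cnj l) z) | x y c. (x, y) \<in> T}"
    have TT': "T \<subseteq> T'"
    proof
      fix p assume pT: "p \<in> T"
      obtain x y where xy: "p = (x, y)" by (cases p)
      have "p = (x + scaleC 0 z, y - scaleC (0 * cnj l) z) \<and> (x, y) \<in> T" using pT xy by simp
      thus "p \<in> T'" unfolding T'_def mem_Collect_eq
        by (intro exI[of _ x] exI[of _ y] exI[of _ 0])
    qed
    have T'X: "T' \<subseteq> X \<times> X"
    proof
      fix p assume "p \<in> T'"
      then obtain x y c where "(x, y) \<in> T" "p = (x + scaleC c z, y - scaleC (c * cnj l) z)"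
        unfolding T'_def by blast
      thus "p \<in> X \<times> X" using TX zX sub by (auto intro: csubspace_diff csubspace_add csubspace_scaleC)
    qed
    have zT': "(z, - scaleC (cnj l) z) \<in> T'"
    proof -
      have "(z, - scaleC (cnj l) z) = (0 + scaleC 1 z, 0 - scaleC (1 * cnj l) z)" by (simp add: scaleC_one)
      thus ?thesis unfolding T'_def mem_Collect_eq using is_operatorD(1)[OF op]
        by (intro exI[of _ 0] exI[of _ 1]) simp
    qed
    have op': "is_operator T'"
      unfolding is_operator_def
    proof (intro conjI ballI allI impI)
      show "(0, 0) \<in> T'" using TT' is_operatorD(1)[OF op] by blast
    next
      fix p q assume "p \<in> T'" "q \<in> T'"
      then obtain x1 y1 c1 x2 y2 c2 where A: "(x1, y1) \<in> T" "p = (x1 + scaleC c1 z, y1 - scaleC (c1 * cnj l) z)"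
        "(x2, y2) \<in> T" "q = (x2 + scaleC c2 z, y2 - scaleC (c2 * cnj l) z)"
        unfolding T'_def by blast
      have "(fst p + fst q, snd p + snd q) = ((x1 + x2) + scaleC (c1 + c2) z, (y1 + y2) - scaleC ((c1 + c2) * cnj l) z)"
        using A by (simp add: scaleC_add_left distrib_right)
      thus "(fst p + fst q, snd p + snd q) \<in> T'" unfolding T'_def using is_operatorD(2)[OF op A(1) A(3)] by blast
    next
      fix d p assume "p \<in> T'"
      then obtain x y c where A: "(x, y) \<in> T" "p = (x + scaleC c z, y - scaleC (c * cnj l) z)"
        unfolding T'_def by blast
      have "(scaleC d (fst p), scaleC d (snd p)) = (scaleC d x + scaleC (d * c) z, scaleC d y - scaleC ((d * c) * cnj l) z)"
        using A by (simp add: scaleC_add_right scaleC_diff_right scaleC_scaleC mult.assoc)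
      thus "(scaleC d (fst p), scaleC d (snd p)) \<in> T'" unfolding T'_def using is_operatorD(3)[OF op A(1)] by blast
    next
      fix u v1 v2 assume "(u, v1) \<in> T'" "(u, v2) \<in> T'"
      then obtain x1 y1 c1 x2 y2 c2 where A: "(x1, y1) \<in> T" "u = x1 + scaleC c1 z" "v1 = y1 - scaleC (c1 * cnj l) z"
        "(x2, y2) \<in> T" "u = x2 + scaleC c2 z" "v2 = y2 - scaleC (c2 * cnj l) z"
        unfolding T'_def by blast
      have dT: "(x1 - x2, y1 - y2) \<in> T" by (rule is_operator_diff[OF op A(1) A(4)])
      have dx: "x1 - x2 = scaleC (c2 - c1) z"
      proof -
        have e1: "x1 = u - scaleC c1 z" using A(2) by simp
        have e2: "x2 = u - scaleC c2 z" using A(5) by simp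
        have "x1 - x2 = (u - scaleC c1 z) - (u - scaleC c2 z)" by (subst e1, subst e2, rule refl)
        also have "\<dots> = scaleC (c2 - c1) z" by (simp add: scaleC_diff_left)
        finally show ?thesis .
      qed
      have c12: "c1 = c2"
      proof (rule ccontr)
        assume "c1 \<noteq> c2"
        hence d0: "c2 - c1 \<noteq> 0" by simp
        have "(scaleC (1 / (c2 - c1)) (x1 - x2), scaleC (1 / (c2 - c1)) (y1 - y2)) \<in> T"
          by (rule is_operatorD(3)[OF op dT])
        moreover have "scaleC (1 / (c2 - c1)) (x1 - x2) = z"
          unfolding dx using d0 by (simp add: scaleC_scaleC scaleC_one)
        ultimately show False using znot by simp
      qed
      hence "x1 = x2" using dx by simp
      hence "y1 = y2" using is_operatorD(4)[OF op A(1)] A(4) by simp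
      thus "v1 = v2" using A c12 by simp
    qed
    have diss': "dissipative T'"
      unfolding dissipative_def
    proof (clarify)
      fix u v assume "(u, v) \<in> T'"
      then obtain x y c where A: "(x, y) \<in> T" "u = x + scaleC c z" "v = y - scaleC (c * cnj l) z"
        unfolding T'_def by blast
      define b where "b = cinner x z"
      have k1: "cinner y z = l * b" unfolding b_def by (rule key[OF A(1)])
      have k2: "cinner z x = cnj b" unfolding b_def by (rule cinner_commute)
      have k3: "cinner z z = complex_of_real ((norm z)^2)" by (rule cinner_self_norm)
      define W where "W = cnj c * (l * b)"
      define S where "S = (cmod c)^2 * (norm z)^2"
      have "cinner v u = cinner y x + cnj c * cinner y z - (c * cnj l) * cinner z x
          - (c * cnj l) * (cnj c * cinner z z)"
        unfolding A by (simp add: cinner_simps algebra_simps)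
      also have "\<dots> = cinner y x + (W - cnj W) - cnj l * complex_of_real S"
      proof -
        have "c * cnj c = complex_of_real ((cmod c)^2)" using complex_norm_square[of c] by simp
        hence "(c * cnj l) * (cnj c * complex_of_real ((norm z)^2))
               = cnj l * complex_of_real ((cmod c)^2 * (norm z)^2)"
          by (simp add: mult_ac)
        thus ?thesis unfolding k1 k2 k3 W_def S_def by simp
      qed
      finally have ce: "cinner v u = cinner y x + (W - cnj W) - cnj l * complex_of_real S" .
      have r1: "Re (W - cnj W) = 0" by simp
      have r2: "Re (cnj l * complex_of_real S) = Re l * S" by simp
      have "Re (cinner v u) = Re (cinner y x) + Re (W - cnj W) - Re (cnj l * complex_of_real S)"
        unfolding ce by (simp only: minus_complex.sel plus_complex.sel)
      hence "Re (cinner v u) = Re (cinner y x) - Re l * ((cmod c)^2 * (norm z)^2)"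
        using r1 r2 unfolding S_def by linarith
      moreover have "Re (cinner y x) \<le> 0" by (rule dissipativeD[OF diss A(1)])
      moreover have "Re l * ((cmod c)^2 * (norm z)^2) \<ge> 0" using l by simp
      ultimately show "Re (cinner v u) \<le> 0" by linarith
    qed
    have "T' = T" by (rule max[OF TT' T'X op' diss'])
    thus False using zT' znot by blast
  qed
qed

lemma m_diss_closure_iff:
  fixes f :: "'a::chilbert_space \<Rightarrow> 'a"
  assumes cl: "closed X" and sub: "csubspace X" and D: "csubspace D" and DX: "D \<subseteq> X"
    and dense: "X \<subseteq> closure D" and lin: "clinear_on D f" and fX: "\<forall>x\<in>D. f x \<in> X"
    and diss: "dissipative (graph D f)" and l: "Re l > 0"
  shows "m_dissipative_in X (closure (graph D f)) \<longleftrightarrow>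
         (\<forall>w\<in>X. \<forall>e>0. \<exists>x\<in>D. norm (f x - scaleC l x - w) < e)"
proof -
  define G where "G = graph D f"
  have op: "is_operator G" unfolding G_def by (rule is_operator_graph[OF D lin])
  have GX: "G \<subseteq> X \<times> X" unfolding G_def graph_def using DX fX by auto
  have dG: "X \<subseteq> closure (fst ` G)" unfolding G_def fst_graph by (rule dense)
  have dissG: "dissipative G" unfolding G_def by (rule diss)
  note C = closure_op[OF op dissG GX cl dG]
  have Gpair: "fst p \<in> D \<and> snd p = f (fst p)" if "p \<in> G" for p
    using that unfolding G_def graph_def by auto
  show ?thesis unfolding G_def[symmetric]
  proof
    assume m: "m_dissipative_in X (closure G)"
    show "\<forall>w\<in>X. \<forall>e>0. \<exists>x\<in>D. norm (f x - scaleC l x - w) < e"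
    proof (intro ballI allI impI)
      fix w e assume w: "w \<in> X" and e: "(e::real) > 0"
      have "fst ` G \<subseteq> fst ` closure G" using closure_subset by blast
      hence "closure (fst ` G) \<subseteq> closure (fst ` closure G)" by (rule closure_mono)
      hence dC: "X \<subseteq> closure (fst ` closure G)" using dG by blast
      from maximal_range[OF m cl sub dC l w] obtain x y where
        xy: "(x, y) \<in> closure G" "y - scaleC l x = w" by blast
      from xy(1) obtain a where a: "\<And>n. a n \<in> G" "a \<longlonglongrightarrow> (x, y)"
        unfolding closure_sequential by blast
      have "(\<lambda>n. snd (a n) - scaleC l (fst (a n))) \<longlonglongrightarrow> snd (x, y) - scaleC l (fst (x, y))"
        using a(2) by (intro tendsto_diff tendsto_scaleC tendsto_fst tendsto_snd)
      hence "(\<lambda>n. snd (a n) - scaleC l (fst (a n))) \<longlonglongrightarrow> w" using xy(2) by simp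
      then obtain N where N: "\<forall>n\<ge>N. norm (snd (a n) - scaleC l (fst (a n)) - w) < e"
        using e unfolding LIMSEQ_iff by blast
      have h: "norm (snd (a N) - scaleC l (fst (a N)) - w) < e" using N by blast
      have eq: "snd (a N) = f (fst (a N))" using Gpair[OF a(1)[of N]] by blast
      from h have "norm (f (fst (a N)) - scaleC l (fst (a N)) - w) < e" by (simp only: eq)
      thus "\<exists>x\<in>D. norm (f x - scaleC l x - w) < e" using Gpair[OF a(1)[of N]] by blast
    qed
  next
    assume R: "\<forall>w\<in>X. \<forall>e>0. \<exists>x\<in>D. norm (f x - scaleC l x - w) < e"
    have max: "T' = closure G" if T1: "closure G \<subseteq> T'" and T2: "T' \<subseteq> X \<times> X"
      and T3: "is_operator T'" and T4: "dissipative T'" for T'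
    proof
      show "T' \<subseteq> closure G"
      proof
        fix q assume qT: "q \<in> T'"
        obtain x' y' where q: "q = (x', y')" by (cases q)
        have xyT: "(x', y') \<in> T'" using qT q by simp
        define w where "w = y' - scaleC l x'"
        have wX: "w \<in> X" unfolding w_def using T2 xyT sub by (auto intro: csubspace_diff csubspace_scaleC)
        have ex: "\<exists>x\<in>D. norm (f x - scaleC l x - w) < inverse (real (Suc n))" for n
          using R wX by simp
        define d where "d n = (SOME x. x \<in> D \<and> norm (f x - scaleC l x - w) < inverse (real (Suc n)))" for n
        have d: "d n \<in> D \<and> norm (f (d n) - scaleC l (d n) - w) < inverse (real (Suc n))" for n
          unfolding d_def using ex[of n] by (rule someI_ex[OF bexE]) blast+
        define p where "p n = (d n, f (d n))" for n
        have pG: "p n \<in> G" for n unfolding p_def G_def graph_iff using d by simp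
        have lim: "(\<lambda>n. snd (p n) - scaleC l (fst (p n))) \<longlonglongrightarrow> w"
          unfolding LIMSEQ_iff
        proof (intro allI impI)
          fix r :: real assume r: "r > 0"
          obtain N :: nat where N: "inverse (real (Suc N)) < r"
            using reals_Archimedean[OF r] by auto
          show "\<exists>no. \<forall>n\<ge>no. norm (snd (p n) - scaleC l (fst (p n)) - w) < r"
          proof (intro exI allI impI)
            fix n assume "N \<le> n"
            hence i: "inverse (real (Suc n)) \<le> inverse (real (Suc N))" by (simp add: le_imp_inverse_le)
            have "norm (f (d n) - scaleC l (d n) - w) < inverse (real (Suc n))" using d[of n] by blast
            hence "norm (f (d n) - scaleC l (d n) - w) < r" using i N by linarith
            thus "norm (snd (p n) - scaleC l (fst (p n)) - w) < r" unfolding p_def by simp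
          qed
        qed
        from cauchy_lb[OF op dissG l pG lim] obtain x where px: "p \<longlonglongrightarrow> (x, w + scaleC l x)" by blast
        have xC: "(x, w + scaleC l x) \<in> closure G" unfolding closure_sequential using pG px by blast
        hence xT: "(x, w + scaleC l x) \<in> T'" using T1 by blast
        have dT: "(x' - x, y' - (w + scaleC l x)) \<in> T'" by (rule is_operator_diff[OF T3 xyT xT])
        have "y' - (w + scaleC l x) = scaleC l (x' - x)" unfolding w_def by (simp add: scaleC_diff_right)
        hence dT': "(x' - x, scaleC l (x' - x)) \<in> T'" using dT by simp
        have "Re (cinner (scaleC l (x' - x)) (x' - x)) \<le> 0" by (rule dissipativeD[OF T4 dT'])
        hence "Re l * (norm (x' - x))^2 \<le> 0" by (simp add: cinner_scaleC_left cinner_self_norm)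
        hence "(norm (x' - x))^2 \<le> 0" using l by (simp add: mult_le_0_iff)
        hence "x' = x" by simp
        hence "y' = w + scaleC l x" using is_operatorD(4)[OF T3 xyT] xT by simp
        thus "q \<in> closure G" using xC q \<open>x' = x\<close> by simp
      qed
    qed (rule T1)
    show "m_dissipative_in X (closure G)"
      unfolding m_dissipative_in_def using C max by blast
  qed
qed

lemma pythag_le:
  fixes p q :: "'a::complex_inner"
  assumes "cinner p q = 0"
  shows "norm p \<le> norm (p + q)" "norm q \<le> norm (p + q)"
proof -
  have e: "(norm (p + q))^2 = (norm p)^2 + (norm q)^2" using assms by (simp add: norm_add_sq)
  show "norm p \<le> norm (p + q)" by (rule power2_le_imp_le) (use e in simp_all)
  show "norm q \<le> norm (p + q)" by (rule power2_le_imp_le) (use e in simp_all)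
qed

locale blk =
  fixes Pp Pm :: "'a::chilbert_space \<Rightarrow> 'a" and Dp Dm DA :: "'a set" and A J :: "'a \<Rightarrow> 'a"
  assumes proj_p: "orth_proj Pp" and proj_m: "orth_proj Pm"
    and compl: "\<forall>x. Pp x + Pm x = x"
    and Dp_csub: "csubspace Dp" and Dp_rng: "Dp \<subseteq> range Pp"
    and Dm_csub: "csubspace Dm" and Dm_rng: "Dm \<subseteq> range Pm"
    and DA_eq: "DA = {xp + xm | xp xm. xp \<in> Dp \<and> xm \<in> Dm}"
    and J_eq: "J = (\<lambda>x. Pp x - Pm x)"
    and A_lin: "clinear_on DA A"
begin

lemma compl': "\<forall>x. Pm x + Pp x = x" using compl by (simp add: add.commute)
lemma PpPm[simp]: "Pp (Pm x) = 0" by (rule compl_PQ[OF proj_p compl])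
lemma PmPp[simp]: "Pm (Pp x) = 0" by (rule compl_PQ[OF proj_m compl'])

lemma Pp_range: "x \<in> range Pp \<longleftrightarrow> Pp x = x" by (rule orth_proj_range[OF proj_p])
lemma Pm_range: "x \<in> range Pm \<longleftrightarrow> Pm x = x" by (rule orth_proj_range[OF proj_m])

lemma Dp_P: "x \<in> Dp \<Longrightarrow> Pp x = x \<and> Pm x = 0"
  using Dp_rng Pp_range by (metis PmPp subsetD)
lemma Dm_P: "x \<in> Dm \<Longrightarrow> Pm x = x \<and> Pp x = 0"
  using Dm_rng Pm_range by (metis PpPm subsetD)

lemma orth_pm: "v \<in> range Pm \<Longrightarrow> cinner (Pp u) v = 0"
  using compl_orth[OF proj_m compl' proj_p, of u v] Pm_range by simp
lemma orth_mp: "v \<in> range Pp \<Longrightarrow> cinner (Pm u) v = 0"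
  using compl_orth[OF proj_p compl proj_m, of u v] Pp_range by simp

lemma Pp_add: "Pp (x + y) = Pp x + Pp y" by (rule orth_proj_add[OF proj_p])
lemma Pm_add: "Pm (x + y) = Pm x + Pm y" by (rule orth_proj_add[OF proj_m])
lemma Pp_diff: "Pp (x - y) = Pp x - Pp y" by (rule orth_proj_diff[OF proj_p])
lemma Pm_diff: "Pm (x - y) = Pm x - Pm y" by (rule orth_proj_diff[OF proj_m])
lemma Pp_minus: "Pp (- x) = - Pp x" by (rule orth_proj_minus[OF proj_p])
lemma Pm_minus: "Pm (- x) = - Pm x" by (rule orth_proj_minus[OF proj_m])
lemma Pp_scaleC: "Pp (scaleC c x) = scaleC c (Pp x)" by (rule orth_proj_scaleC[OF proj_p])
lemma Pm_scaleC: "Pm (scaleC c x) = scaleC c (Pm x)" by (rule orth_proj_scaleC[OF proj_m])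
lemma Pp_idem[simp]: "Pp (Pp x) = Pp x" by (rule orth_proj_idem[OF proj_p])
lemma Pm_idem[simp]: "Pm (Pm x) = Pm x" by (rule orth_proj_idem[OF proj_m])

lemmas P_simps = Pp_add Pm_add Pp_diff Pm_diff Pp_minus Pm_minus Pp_scaleC Pm_scaleC

lemma rngPp_csub: "csubspace (range Pp)" by (rule orth_proj_range_csubspace[OF proj_p])
lemma rngPm_csub: "csubspace (range Pm)" by (rule orth_proj_range_csubspace[OF proj_m])
lemma rngPp_closed: "closed (range Pp)" by (rule orth_proj_range_closed[OF proj_p])
lemma rngPm_closed: "closed (range Pm)" by (rule orth_proj_range_closed[OF proj_m])

lemma DA_csub: "csubspace DA"
  unfolding csubspace_def DA_eq
proof (intro conjI ballI allI)
  show "0 \<in> {xp + xm |xp xm. xp \<in> Dp \<and> xm \<in> Dm}"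
    using csubspace_0[OF Dp_csub] csubspace_0[OF Dm_csub] by force
next
  fix x y assume "x \<in> {xp + xm |xp xm. xp \<in> Dp \<and> xm \<in> Dm}" "y \<in> {xp + xm |xp xm. xp \<in> Dp \<and> xm \<in> Dm}"
  then obtain a b c d where "a \<in> Dp" "b \<in> Dm" "x = a + b" "c \<in> Dp" "d \<in> Dm" "y = c + d" by blast
  moreover have "x + y = (a + c) + (b + d)" using calculation by (simp add: algebra_simps)
  ultimately show "x + y \<in> {xp + xm |xp xm. xp \<in> Dp \<and> xm \<in> Dm}"
    using csubspace_add[OF Dp_csub] csubspace_add[OF Dm_csub] by blast
next
  fix c x assume "x \<in> {xp + xm |xp xm. xp \<in> Dp \<and> xm \<in> Dm}"
  then obtain a b where "a \<in> Dp" "b \<in> Dm" "x = a + b" by blast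
  moreover have "scaleC c x = scaleC c a + scaleC c b" using calculation by (simp add: scaleC_add_right)
  ultimately show "scaleC c x \<in> {xp + xm |xp xm. xp \<in> Dp \<and> xm \<in> Dm}"
    using csubspace_scaleC[OF Dp_csub] csubspace_scaleC[OF Dm_csub] by blast
qed

lemma Dp_DA: "x \<in> Dp \<Longrightarrow> x \<in> DA"
  unfolding DA_eq using csubspace_0[OF Dm_csub] by force
lemma Dm_DA: "x \<in> Dm \<Longrightarrow> x \<in> DA"
  unfolding DA_eq using csubspace_0[OF Dp_csub] by force

lemma DA_decomp: "x \<in> DA \<Longrightarrow> \<exists>xp xm. xp \<in> Dp \<and> xm \<in> Dm \<and> x = xp + xm"
  unfolding DA_eq by blast

lemma A_add: "x \<in> DA \<Longrightarrow> y \<in> DA \<Longrightarrow> A (x + y) = A x + A y"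
  by (rule clinear_onD_add[OF A_lin])
lemma A_diff: "x \<in> DA \<Longrightarrow> y \<in> DA \<Longrightarrow> A (x - y) = A x - A y"
  by (rule clinear_onD_diff[OF A_lin DA_csub])
lemma A_scaleC: "x \<in> DA \<Longrightarrow> A (scaleC c x) = scaleC c (A x)"
  by (rule clinear_onD_scaleC[OF A_lin])
lemma A_minus: "x \<in> DA \<Longrightarrow> A (- x) = - A x"
  by (rule clinear_onD_minus[OF A_lin])

lemma J_app: "J y = Pp y - Pm y" by (simp add: J_eq)
lemma Pm_J: "Pm (J y) = - Pm y" by (simp add: J_app Pm_diff)
lemma Pp_J: "Pp (J y) = Pp y" by (simp add: J_app Pp_diff)
lemma J_J: "J (J y) = y"
proof -
  have "J (J y) = Pp y + Pm y" by (simp add: J_app Pp_diff Pm_diff)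
  thus ?thesis using compl by simp
qed
lemma J_tendsto: "f \<longlonglongrightarrow> a \<Longrightarrow> (\<lambda>n. J (f n)) \<longlonglongrightarrow> J a"
  unfolding J_app by (intro tendsto_diff orth_proj_tendsto[OF proj_p] orth_proj_tendsto[OF proj_m])
lemma J_add: "J (x + y) = J x + J y" by (simp add: J_app P_simps algebra_simps)
lemma J_scaleC: "J (scaleC c x) = scaleC c (J x)" by (simp add: J_app P_simps scaleC_diff_right)

lemma JA_lin: "clinear_on DA (\<lambda>x. J (A x))"
  unfolding clinear_on_def by (simp add: A_add A_scaleC J_add J_scaleC)

lemma closure_J:
  "{(x, J y) | x y. (x, y) \<in> closure (graph DA A)} = closure (graph DA (\<lambda>x. J (A x)))"
proof -
  have one: "(x, J y) \<in> closure (graph DA (\<lambda>x. J (g x)))" if "(x, y) \<in> closure (graph DA g)" for x y g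
  proof -
    from that obtain a where a: "\<And>n. a n \<in> graph DA g" "a \<longlonglongrightarrow> (x, y)"
      unfolding closure_sequential by blast
    have "(\<lambda>n. (fst (a n), J (snd (a n)))) \<longlonglongrightarrow> (fst (x, y), J (snd (x, y)))"
      using a(2) by (intro tendsto_Pair J_tendsto tendsto_fst tendsto_snd)
    moreover have "(fst (a n), J (snd (a n))) \<in> graph DA (\<lambda>x. J (g x))" for n
      using a(1)[of n] unfolding graph_def by auto
    ultimately show ?thesis unfolding closure_sequential
      by (intro exI[of _ "\<lambda>n. (fst (a n), J (snd (a n)))"]) simp
  qed
  show ?thesis
  proof
    show "{(x, J y) |x y. (x, y) \<in> closure (graph DA A)} \<subseteq> closure (graph DA (\<lambda>x. J (A x)))"
      using one by blast
  next
    show "closure (graph DA (\<lambda>x. J (A x))) \<subseteq> {(x, J y) |x y. (x, y) \<in> closure (graph DA A)}"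
    proof
      fix p assume p: "p \<in> closure (graph DA (\<lambda>x. J (A x)))"
      obtain x w where xw: "p = (x, w)" by (cases p)
      have "(x, J w) \<in> closure (graph DA (\<lambda>x. J (J (A x))))" using one[of x w "\<lambda>x. J (A x)"] p xw by simp
      hence "(x, J w) \<in> closure (graph DA A)" by (simp add: J_J)
      moreover have "p = (x, J (J w))" using xw by (simp add: J_J)
      ultimately show "p \<in> {(x, J y) |x y. (x, y) \<in> closure (graph DA A)}" by blast
    qed
  qed
qed

end


locale blk_mu = blk +
  fixes mu :: complex
  assumes bij: "bij_betw (\<lambda>x. Pm (A x) - scaleC mu x) Dm (range Pm)"
begin

abbreviation R where "R \<equiv> resolvent Dm (\<lambda>z. Pm (A z)) mu"

lemma R_eq: "R = inv_into Dm (\<lambda>x. Pm (A x) - scaleC mu x)" by (simp add: resolvent_def)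

lemma R1: assumes "y \<in> range Pm" shows "R y \<in> Dm" "Pm (A (R y)) - scaleC mu (R y) = y"
proof -
  have y: "y \<in> (\<lambda>x. Pm (A x) - scaleC mu x) ` Dm" using bij_betw_imp_surj_on[OF bij] assms by simp
  show "R y \<in> Dm" unfolding R_eq by (rule inv_into_into[OF y])
  show "Pm (A (R y)) - scaleC mu (R y) = y" unfolding R_eq using f_inv_into_f[OF y] by simp
qed

lemma R2: assumes "x \<in> Dm" shows "R (Pm (A x) - scaleC mu x) = x"
  unfolding R_eq using inv_into_f_f[OF bij_betw_imp_inj_on[OF bij] assms] by simp

lemma PmA_rng: "Pm y \<in> range Pm" by simp

lemma R_add: assumes a: "a \<in> range Pm" and b: "b \<in> range Pm" shows "R (a + b) = R a + R b"
proof -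
  have ab: "R a + R b \<in> Dm" using R1(1)[OF a] R1(1)[OF b] by (rule csubspace_add[OF Dm_csub])
  have "Pm (A (R a + R b)) - scaleC mu (R a + R b)
      = (Pm (A (R a)) - scaleC mu (R a)) + (Pm (A (R b)) - scaleC mu (R b))"
    using R1(1)[OF a] R1(1)[OF b] Dm_DA by (simp add: A_add Pm_add scaleC_add_right algebra_simps)
  also have "\<dots> = a + b" using R1(2)[OF a] R1(2)[OF b] by simp
  finally have "R (a + b) = R (Pm (A (R a + R b)) - scaleC mu (R a + R b))" by simp
  also have "\<dots> = R a + R b" by (rule R2[OF ab])
  finally show ?thesis .
qed

lemma R_scaleC: assumes a: "a \<in> range Pm" shows "R (scaleC c a) = scaleC c (R a)"
proof -
  have ca: "scaleC c (R a) \<in> Dm" using R1(1)[OF a] by (rule csubspace_scaleC[OF Dm_csub])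
  have "Pm (A (scaleC c (R a))) - scaleC mu (scaleC c (R a)) = scaleC c (Pm (A (R a)) - scaleC mu (R a))"
    using R1(1)[OF a] Dm_DA by (simp add: A_scaleC Pm_scaleC scaleC_diff_right scaleC_scaleC mult.commute)
  also have "\<dots> = scaleC c a" using R1(2)[OF a] by simp
  finally have "R (scaleC c a) = R (Pm (A (scaleC c (R a))) - scaleC mu (scaleC c (R a)))" by simp
  also have "\<dots> = scaleC c (R a)" by (rule R2[OF ca])
  finally show ?thesis .
qed

lemma R_minus: assumes a: "a \<in> range Pm" shows "R (- a) = - R a"
  using R_scaleC[OF a, of "-1"] by (simp add: scaleC_minus_one)

lemma R_diff: assumes a: "a \<in> range Pm" and b: "b \<in> range Pm" shows "R (a - b) = R a - R b"
proof -
  have "- b \<in> range Pm" using b by (rule csubspace_minus[OF rngPm_csub])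
  thus ?thesis using R_add[OF a, of "- b"] R_minus[OF b] by simp
qed

lemma part1:
  assumes xp: "xp \<in> Dp"
  defines "u \<equiv> R (Pm (A xp))"
  shows "xp - u \<in> DA"
    and "cinner (Pp (A xp) - Pp (A u)) xp = cinner (J (A (xp - u))) (xp - u) + mu * cinner u u"
proof -
  have uD: "u \<in> Dm" unfolding u_def by (rule R1(1)) simp
  have uE: "Pm (A u) - scaleC mu u = Pm (A xp)" unfolding u_def by (rule R1(2)) simp
  show xu: "xp - u \<in> DA" using Dp_DA[OF xp] Dm_DA[OF uD] by (rule csubspace_diff[OF DA_csub])
  define s where "s = Pp (A xp) - Pp (A u)"
  have "J (A (xp - u)) = s + scaleC mu u"
  proof -
    have "J (A (xp - u)) = (Pp (A xp) - Pp (A u)) - (Pm (A xp) - Pm (A u))"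
      using Dp_DA[OF xp] Dm_DA[OF uD] by (simp add: A_diff J_app P_simps)
    also have "Pm (A xp) - Pm (A u) = - scaleC mu u" using uE by (simp add: algebra_simps)
    finally show ?thesis unfolding s_def by simp
  qed
  moreover have "cinner s u = 0"
  proof -
    have "s = Pp (A xp - A u)" unfolding s_def by (simp add: Pp_diff)
    moreover have "u \<in> range Pm" using uD Dm_rng by blast
    ultimately show ?thesis using orth_pm by simp
  qed
  moreover have "cinner u xp = 0"
  proof -
    have "u = Pm u" using Dm_P[OF uD] by simp
    moreover have "xp \<in> range Pp" using xp Dp_rng by blast
    ultimately show ?thesis using orth_mp[of xp u] by simp
  qed
  ultimately show "cinner (Pp (A xp) - Pp (A u)) xp = cinner (J (A (xp - u))) (xp - u) + mu * cinner u u"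
    unfolding s_def[symmetric] by (simp add: cinner_simps)
qed

definition S where "S x = Pp (A x) - Pp (A (R (Pm (A x))))"

lemma part2:
  assumes diss: "dissipative (graph DA (\<lambda>x. J (A x)))" and mu: "Re mu < 0"
  shows "dissipative (graph Dp S)"
  unfolding dissipative_def
proof (clarify)
  fix x y assume "(x, y) \<in> graph Dp S"
  hence xp: "x \<in> Dp" and y: "y = S x" unfolding graph_iff by auto
  define u where "u = R (Pm (A x))"
  have "(x - u, J (A (x - u))) \<in> graph DA (\<lambda>x. J (A x))"
    unfolding graph_iff u_def using part1(1)[OF xp] by simp
  hence d: "Re (cinner (J (A (x - u))) (x - u)) \<le> 0" by (rule dissipativeD[OF diss])
  have "cinner y x = cinner (J (A (x - u))) (x - u) + mu * complex_of_real ((norm u)^2)"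
    using part1(2)[OF xp] unfolding y S_def u_def by (simp add: cinner_self_norm)
  hence "Re (cinner y x) = Re (cinner (J (A (x - u))) (x - u)) + Re mu * (norm u)^2" by simp
  moreover have "Re mu * (norm u)^2 \<le> 0" using mu by (simp add: mult_nonpos_nonneg)
  ultimately show "Re (cinner y x) \<le> 0" using d by linarith
qed

lemma S_rng: "S x \<in> range Pp"
  unfolding S_def Pp_diff[symmetric] by simp

lemma S_lin: "clinear_on Dp S"
  unfolding clinear_on_def
proof (intro conjI ballI allI)
  fix x y assume x: "x \<in> Dp" and y: "y \<in> Dp"
  have xD: "x \<in> DA" and yD: "y \<in> DA" using x y Dp_DA by auto
  have "R (Pm (A (x + y))) = R (Pm (A x)) + R (Pm (A y))"
    using xD yD by (simp add: A_add Pm_add R_add)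
  moreover have "R (Pm (A x)) \<in> DA" "R (Pm (A y)) \<in> DA" using R1(1) Dm_DA by auto
  ultimately show "S (x + y) = S x + S y"
    unfolding S_def using xD yD by (simp add: A_add Pp_add algebra_simps)
next
  fix c x assume x: "x \<in> Dp"
  have xD: "x \<in> DA" using x Dp_DA by auto
  have "R (Pm (A (scaleC c x))) = scaleC c (R (Pm (A x)))"
    using xD by (simp add: A_scaleC Pm_scaleC R_scaleC)
  moreover have "R (Pm (A x)) \<in> DA" using R1(1) Dm_DA by auto
  ultimately show "S (scaleC c x) = scaleC c (S x)"
    unfolding S_def using xD by (simp add: A_scaleC Pp_scaleC scaleC_diff_right)
qed

lemma decomp_a:
  assumes xp: "xp \<in> Dp" and g: "g \<in> range Pm"
  defines "x \<equiv> xp - R (Pm (A xp)) - R g"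
  shows "x \<in> DA"
    and "J (A x) - scaleC (- mu) x = (S xp - scaleC (- mu) xp) - Pp (A (R g)) + g"
proof -
  define u where "u = R (Pm (A xp))"
  define v where "v = R g"
  have uD: "u \<in> Dm" unfolding u_def by (rule R1(1)) simp
  have uE: "Pm (A u) - scaleC mu u = Pm (A xp)" unfolding u_def by (rule R1(2)) simp
  have vD: "v \<in> Dm" unfolding v_def by (rule R1(1)[OF g])
  have vE: "Pm (A v) - scaleC mu v = g" unfolding v_def by (rule R1(2)[OF g])
  have xpD: "xp \<in> DA" using xp Dp_DA by auto
  have uDA: "u \<in> DA" and vDA: "v \<in> DA" using uD vD Dm_DA by auto
  have xe: "x = xp - u - v" unfolding x_def u_def v_def by simp
  have xuD: "xp - u \<in> DA" using xpD uDA by (rule csubspace_diff[OF DA_csub])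
  show "x \<in> DA" unfolding xe using xuD vDA by (rule csubspace_diff[OF DA_csub])
  have Ax: "A x = A xp - A u - A v" unfolding xe using xuD vDA xpD uDA by (simp add: A_diff)
  have PmAu: "Pm (A u) = Pm (A xp) + scaleC mu u" using uE by (simp add: algebra_simps)
  have PmAv: "Pm (A v) = g + scaleC mu v" using vE by (simp add: algebra_simps)
  have Sxp: "S xp = Pp (A xp) - Pp (A u)" unfolding S_def u_def by simp
  have "J (A x) = Pp (A xp) - Pp (A u) - Pp (A v) - (Pm (A xp) - Pm (A u) - Pm (A v))"
    unfolding Ax by (simp add: J_app P_simps)
  also have "\<dots> = S xp - Pp (A v) + scaleC mu u + g + scaleC mu v"
    unfolding Sxp PmAu PmAv by (simp add: algebra_simps)
  finally have JAx: "J (A x) = S xp - Pp (A v) + scaleC mu u + g + scaleC mu v" .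
  have sx: "scaleC (- mu) x = - scaleC mu xp + scaleC mu u + scaleC mu v"
    unfolding xe by (simp add: scaleC_minus_left scaleC_diff_right scaleC_add_right algebra_simps)
  show "J (A x) - scaleC (- mu) x = (S xp - scaleC (- mu) xp) - Pp (A (R g)) + g"
    unfolding JAx sx v_def[symmetric] by (simp add: scaleC_minus_left algebra_simps)
qed

lemma decomp_b:
  assumes x: "x \<in> DA"
  obtains xp g where "xp \<in> Dp" "g \<in> range Pm" "x = xp - R (Pm (A xp)) - R g"
proof -
  from DA_decomp[OF x] obtain xp xm where xp: "xp \<in> Dp" and xm: "xm \<in> Dm" and xe: "x = xp + xm" by blast
  define g where "g = Pm (J (A x) - scaleC (- mu) x)"
  have g: "g \<in> range Pm" unfolding g_def by simp
  have xpD: "xp \<in> DA" and xmD: "xm \<in> DA" using xp xm Dp_DA Dm_DA by auto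
  have "g = - Pm (A x) + scaleC mu (Pm x)"
    unfolding g_def by (simp add: Pm_diff Pm_add Pm_J Pm_scaleC scaleC_minus_left algebra_simps)
  also have "Pm x = xm" unfolding xe using Dp_P[OF xp] Dm_P[OF xm] by (simp add: Pm_add)
  also have "Pm (A x) = Pm (A xp) + Pm (A xm)" unfolding xe using xpD xmD by (simp add: A_add Pm_add)
  finally have "g = - Pm (A xp) - (Pm (A xm) - scaleC mu xm)" by (simp add: algebra_simps)
  hence "R g = R (- Pm (A xp)) - R (Pm (A xm) - scaleC mu xm)"
    using R_diff[of "- Pm (A xp)" "Pm (A xm) - scaleC mu xm"] csubspace_minus[OF rngPm_csub]
      bij_betw_imp_surj_on[OF bij] xm by force
  also have "\<dots> = - R (Pm (A xp)) - xm" using R_minus[of "Pm (A xp)"] R2[OF xm] by simp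
  finally have Rg: "R g = - R (Pm (A xp)) - xm" .
  have "x = xp - R (Pm (A xp)) - R g" unfolding xe Rg by (simp add: algebra_simps)
  thus ?thesis using that xp g by blast
qed

end

theorem lemma2p5:
  fixes Pp Pm :: "'a::chilbert_space \<Rightarrow> 'a"
    and Dp Dm :: "'a set"
    and A :: "'a \<Rightarrow> 'a"
  defines "J \<equiv> (\<lambda>x. Pp x - Pm x)"
    and "DA \<equiv> {xp + xm | xp xm. xp \<in> Dp \<and> xm \<in> Dm}"
    and "F \<equiv> (\<lambda>\<mu> x. resolvent Dm (\<lambda>z. Pm (A z)) \<mu> (Pm (A x)))"
    and "G \<equiv> (\<lambda>\<mu> y. Pp (A (resolvent Dm (\<lambda>z. Pm (A z)) \<mu> y)))"
    and "S \<equiv> (\<lambda>\<mu> x. Pp (A x) - Pp (A (resolvent Dm (\<lambda>z. Pm (A z)) \<mu> (Pm (A x)))))"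
  assumes separable: "\<exists>Q::'a set. countable Q \<and> closure Q = UNIV"
    and proj_p: "orth_proj Pp" and proj_m: "orth_proj Pm"
    and compl: "\<forall>x. Pp x + Pm x = x"
    and Dp_sub: "csubspace Dp" "Dp \<subseteq> range Pp"
    and Dm_sub: "csubspace Dm" "Dm \<subseteq> range Pm"
    and A_lin: "clinear_on DA A"
  shows "(\<forall>\<mu> \<in> resolvent_set (range Pm) Dm (\<lambda>z. Pm (A z)). \<forall>xp\<in>Dp.
            xp - F \<mu> xp \<in> DA \<and>
            cinner (S \<mu> xp) xp
              = cinner (J (A (xp - F \<mu> xp))) (xp - F \<mu> xp) + \<mu> * cinner (F \<mu> xp) (F \<mu> xp))
       \<and> (dissipative (graph DA (\<lambda>x. J (A x))) \<longrightarrow>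
            (\<forall>\<mu> \<in> resolvent_set (range Pm) Dm (\<lambda>z. Pm (A z)). Re \<mu> < 0 \<longrightarrow>
               dissipative (graph Dp (S \<mu>))))
       \<and> (dissipative (graph DA (\<lambda>x. J (A x))) \<and> closure DA = UNIV \<and>
          m_dissipative_in (range Pm) (graph Dm (\<lambda>z. - Pm (A z))) \<longrightarrow>
            (\<forall>\<mu>. Re \<mu> < 0 \<and>
                 (\<exists>C. \<forall>x\<in>Dp. norm (F \<mu> x) \<le> C * norm x) \<and>
                 (\<exists>C. \<forall>y\<in>range Pm. norm (G \<mu> y) \<le> C * norm y) \<longrightarrow>
               (m_dissipative_in (range Pp) (closure (graph Dp (S \<mu>)))
                \<longleftrightarrow> m_dissipative_in UNIV {(x, J y) | x y. (x, y) \<in> closure (graph DA A)})))"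
proof -
  interpret blk Pp Pm Dp Dm DA A J
    by unfold_locales (use proj_p proj_m compl Dp_sub Dm_sub A_lin in \<open>simp_all add: J_def DA_def\<close>)
  have rs_bij: "bij_betw (\<lambda>x. Pm (A x) - scaleC \<mu> x) Dm (range Pm)"
    if "\<mu> \<in> resolvent_set (range Pm) Dm (\<lambda>z. Pm (A z))" for \<mu>
    using that unfolding resolvent_set_def by simp
  have P1: "\<forall>\<mu> \<in> resolvent_set (range Pm) Dm (\<lambda>z. Pm (A z)). \<forall>xp\<in>Dp.
            xp - F \<mu> xp \<in> DA \<and>
            cinner (S \<mu> xp) xp
              = cinner (J (A (xp - F \<mu> xp))) (xp - F \<mu> xp) + \<mu> * cinner (F \<mu> xp) (F \<mu> xp)"
  proof (intro ballI)
    fix \<mu> xp assume mu: "\<mu> \<in> resolvent_set (range Pm) Dm (\<lambda>z. Pm (A z))" and xp: "xp \<in> Dp"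
    interpret M: blk_mu Pp Pm Dp Dm DA A J \<mu>
      by unfold_locales (rule rs_bij[OF mu])
    show "xp - F \<mu> xp \<in> DA \<and>
            cinner (S \<mu> xp) xp
              = cinner (J (A (xp - F \<mu> xp))) (xp - F \<mu> xp) + \<mu> * cinner (F \<mu> xp) (F \<mu> xp)"
      using M.part1[OF xp] unfolding F_def S_def by simp
  qed
  have P2: "dissipative (graph DA (\<lambda>x. J (A x))) \<longrightarrow>
            (\<forall>\<mu> \<in> resolvent_set (range Pm) Dm (\<lambda>z. Pm (A z)). Re \<mu> < 0 \<longrightarrow>
               dissipative (graph Dp (S \<mu>)))"
  proof (intro impI ballI)
    fix \<mu> assume diss: "dissipative (graph DA (\<lambda>x. J (A x)))"
      and mu: "\<mu> \<in> resolvent_set (range Pm) Dm (\<lambda>z. Pm (A z))" and re: "Re \<mu> < 0"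
    interpret M: blk_mu Pp Pm Dp Dm DA A J \<mu>
      by unfold_locales (rule rs_bij[OF mu])
    have S_eq: "S \<mu> = M.S" by (rule ext) (simp add: S_def M.S_def)
    show "dissipative (graph Dp (S \<mu>))" unfolding S_eq by (rule M.part2[OF diss re])
  qed
  have P3: "dissipative (graph DA (\<lambda>x. J (A x))) \<and> closure DA = UNIV \<and>
          m_dissipative_in (range Pm) (graph Dm (\<lambda>z. - Pm (A z))) \<longrightarrow>
            (\<forall>\<mu>. Re \<mu> < 0 \<and>
                 (\<exists>C. \<forall>x\<in>Dp. norm (F \<mu> x) \<le> C * norm x) \<and>
                 (\<exists>C. \<forall>y\<in>range Pm. norm (G \<mu> y) \<le> C * norm y) \<longrightarrow>
               (m_dissipative_in (range Pp) (closure (graph Dp (S \<mu>)))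
                \<longleftrightarrow> m_dissipative_in UNIV {(x, J y) | x y. (x, y) \<in> closure (graph DA A)}))"
  proof (intro impI allI)
    fix \<mu>
    assume H: "dissipative (graph DA (\<lambda>x. J (A x))) \<and> closure DA = UNIV \<and>
          m_dissipative_in (range Pm) (graph Dm (\<lambda>z. - Pm (A z)))"
      and H2: "Re \<mu> < 0 \<and>
                 (\<exists>C. \<forall>x\<in>Dp. norm (F \<mu> x) \<le> C * norm x) \<and>
                 (\<exists>C. \<forall>y\<in>range Pm. norm (G \<mu> y) \<le> C * norm y)"
    have dissJA: "dissipative (graph DA (\<lambda>x. J (A x)))" using H by blast
    have dense: "closure DA = UNIV" using H by blast
    have md: "m_dissipative_in (range Pm) (graph Dm (\<lambda>z. - Pm (A z)))" using H by blast
    have re: "Re \<mu> < 0" using H2 by blast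
    obtain C where C: "\<forall>y\<in>range Pm. norm (G \<mu> y) \<le> C * norm y" using H2 by blast
    define l where "l = - \<mu>"
    have l: "Re l > 0" unfolding l_def using re by simp
    have dens_p: "range Pp \<subseteq> closure Dp"
    proof
      fix h assume h: "h \<in> range Pp"
      have "h \<in> closure DA" using dense by simp
      then obtain a where a: "\<And>n. a n \<in> DA" "a \<longlonglongrightarrow> h" unfolding closure_sequential by blast
      have "(\<lambda>n. Pp (a n)) \<longlonglongrightarrow> Pp h" by (rule orth_proj_tendsto[OF proj_p a(2)])
      hence "(\<lambda>n. Pp (a n)) \<longlonglongrightarrow> h" using h Pp_range by simp
      moreover have "Pp (a n) \<in> Dp" for n
      proof -
        obtain xp xm where "xp \<in> Dp" "xm \<in> Dm" "a n = xp + xm" using DA_decomp[OF a(1)[of n]] by blast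
        thus ?thesis using Dp_P Dm_P by (simp add: Pp_add)
      qed
      ultimately show "h \<in> closure Dp" unfolding closure_sequential
        by (intro exI[of _ "\<lambda>n. Pp (a n)"]) simp
    qed
    have dens_m: "range Pm \<subseteq> closure Dm"
    proof
      fix h assume h: "h \<in> range Pm"
      have "h \<in> closure DA" using dense by simp
      then obtain a where a: "\<And>n. a n \<in> DA" "a \<longlonglongrightarrow> h" unfolding closure_sequential by blast
      have "(\<lambda>n. Pm (a n)) \<longlonglongrightarrow> Pm h" by (rule orth_proj_tendsto[OF proj_m a(2)])
      hence "(\<lambda>n. Pm (a n)) \<longlonglongrightarrow> h" using h Pm_range by simp
      moreover have "Pm (a n) \<in> Dm" for n
      proof -
        obtain xp xm where "xp \<in> Dp" "xm \<in> Dm" "a n = xp + xm" using DA_decomp[OF a(1)[of n]] by blast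
        thus ?thesis using Dp_P Dm_P by (simp add: Pm_add)
      qed
      ultimately show "h \<in> closure Dm" unfolding closure_sequential
        by (intro exI[of _ "\<lambda>n. Pm (a n)"]) simp
    qed
    have bij: "bij_betw (\<lambda>x. Pm (A x) - scaleC \<mu> x) Dm (range Pm)"
      unfolding bij_betw_def
    proof (intro conjI)
      show "inj_on (\<lambda>x. Pm (A x) - scaleC \<mu> x) Dm"
      proof (rule inj_onI)
        fix x1 x2 assume x1: "x1 \<in> Dm" and x2: "x2 \<in> Dm"
          and eq: "Pm (A x1) - scaleC \<mu> x1 = Pm (A x2) - scaleC \<mu> x2"
        define u where "u = x1 - x2"
        have uD: "u \<in> Dm" unfolding u_def using x1 x2 by (rule csubspace_diff[OF Dm_csub])
        have "Pm (A u) - scaleC \<mu> u = (Pm (A x1) - scaleC \<mu> x1) - (Pm (A x2) - scaleC \<mu> x2)"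
          unfolding u_def using x1 x2 Dm_DA by (simp add: A_diff Pm_diff scaleC_diff_right algebra_simps)
        hence PAu: "Pm (A u) = scaleC \<mu> u" using eq by simp
        have "(u, - Pm (A u)) \<in> graph Dm (\<lambda>z. - Pm (A z))" unfolding graph_iff using uD by simp
        hence "Re (cinner (- Pm (A u)) u) \<le> 0"
          by (rule dissipativeD[OF conjunct1[OF conjunct2[OF conjunct2[OF md[unfolded m_dissipative_in_def]]]]])
        hence "- Re \<mu> * (norm u)^2 \<le> 0" unfolding PAu by (simp add: cinner_simps cinner_self_norm)
        hence h1: "(- Re \<mu>) * (norm u)^2 \<le> 0" by simp
        have "(norm u)^2 \<le> 0"
        proof (rule ccontr)
          assume "\<not> (norm u)^2 \<le> 0"
          hence "(norm u)^2 > 0" by simp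
          moreover have "- Re \<mu> > 0" using re by simp
          ultimately have "(- Re \<mu>) * (norm u)^2 > 0" by (rule mult_pos_pos[rotated])
          thus False using h1 by linarith
        qed
        thus "x1 = x2" unfolding u_def by simp
      qed
    next
      show "(\<lambda>x. Pm (A x) - scaleC \<mu> x) ` Dm = range Pm"
      proof
        show "(\<lambda>x. Pm (A x) - scaleC \<mu> x) ` Dm \<subseteq> range Pm"
        proof
          fix y assume "y \<in> (\<lambda>x. Pm (A x) - scaleC \<mu> x) ` Dm"
          then obtain x where x: "x \<in> Dm" "y = Pm (A x) - scaleC \<mu> x" by blast
          have "x \<in> range Pm" using x Dm_sub by blast
          hence "scaleC \<mu> x \<in> range Pm" by (rule csubspace_scaleC[OF rngPm_csub])
          thus "y \<in> range Pm" unfolding x(2) using csubspace_diff[OF rngPm_csub] by simp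
        qed
      next
        show "range Pm \<subseteq> (\<lambda>x. Pm (A x) - scaleC \<mu> x) ` Dm"
        proof
          fix g assume g: "g \<in> range Pm"
          have mg: "- g \<in> range Pm" using g by (rule csubspace_minus[OF rngPm_csub])
          have dT: "range Pm \<subseteq> closure (fst ` graph Dm (\<lambda>z. - Pm (A z)))"
            unfolding fst_graph by (rule dens_m)
          from maximal_range[OF md rngPm_closed rngPm_csub dT l mg] obtain x y where
            xy: "(x, y) \<in> graph Dm (\<lambda>z. - Pm (A z))" "y - scaleC l x = - g" by blast
          have x: "x \<in> Dm" and y: "y = - Pm (A x)" using xy(1) unfolding graph_iff by auto
          have "g = Pm (A x) - scaleC \<mu> x"
            using xy(2) unfolding y l_def by (simp add: scaleC_minus_left algebra_simps)
          thus "g \<in> (\<lambda>x. Pm (A x) - scaleC \<mu> x) ` Dm" using x by blast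
        qed
      qed
    qed
    interpret M: blk_mu Pp Pm Dp Dm DA A J \<mu> by unfold_locales (rule bij)
    have S_eq: "S \<mu> = M.S" by (rule ext) (simp add: S_def M.S_def)
    have LHS: "m_dissipative_in (range Pp) (closure (graph Dp (S \<mu>))) \<longleftrightarrow>
         (\<forall>w\<in>range Pp. \<forall>e>0. \<exists>x\<in>Dp. norm (M.S x - scaleC l x - w) < e)"
      unfolding S_eq
      by (rule m_diss_closure_iff[OF rngPp_closed rngPp_csub Dp_csub Dp_rng dens_p M.S_lin
            _ M.part2[OF dissJA re] l]) (simp add: M.S_rng)
    have RHS: "m_dissipative_in UNIV {(x, J y) | x y. (x, y) \<in> closure (graph DA A)} \<longleftrightarrow>
         (\<forall>w\<in>UNIV. \<forall>e>0. \<exists>x\<in>DA. norm (J (A x) - scaleC l x - w) < e)"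
      unfolding closure_J
      by (rule m_diss_closure_iff[OF closed_UNIV csubspace_UNIV DA_csub subset_UNIV _ JA_lin
            _ dissJA l]) (simp_all add: dense)
    have Geq: "G \<mu> y = Pp (A (resolvent Dm (\<lambda>z. Pm (A z)) \<mu> y))" for y by (simp add: G_def)
    have dir1: "(\<forall>w\<in>UNIV. \<forall>e>0. \<exists>x\<in>DA. norm (J (A x) - scaleC l x - w) < e)"
      if dS: "\<forall>w\<in>range Pp. \<forall>e>0. \<exists>x\<in>Dp. norm (M.S x - scaleC l x - w) < e"
    proof (intro ballI allI impI)
      fix w :: 'a and e :: real assume e: "e > 0"
      define g where "g = Pm w"
      define t where "t = Pp w + Pp (A (resolvent Dm (\<lambda>z. Pm (A z)) \<mu> g))"
      have g: "g \<in> range Pm" unfolding g_def by simp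
      have t: "t \<in> range Pp" unfolding t_def Pp_add[symmetric] by simp
      obtain xp where xp: "xp \<in> Dp" "norm (M.S xp - scaleC l xp - t) < e" using dS t e by blast
      define x where "x = xp - resolvent Dm (\<lambda>z. Pm (A z)) \<mu> (Pm (A xp)) - resolvent Dm (\<lambda>z. Pm (A z)) \<mu> g"
      have xD: "x \<in> DA" unfolding x_def by (rule M.decomp_a(1)[OF xp(1) g])
      have "J (A x) - scaleC l x = (M.S xp - scaleC l xp) - Pp (A (resolvent Dm (\<lambda>z. Pm (A z)) \<mu> g)) + g"
        unfolding x_def l_def by (rule M.decomp_a(2)[OF xp(1) g])
      moreover have "w = Pp w + g" unfolding g_def using compl by simp
      ultimately have eqx: "J (A x) - scaleC l x - w = M.S xp - scaleC l xp - t"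
        unfolding t_def by (simp add: algebra_simps)
      have "norm (J (A x) - scaleC l x - w) < e" unfolding eqx by (rule xp(2))
      thus "\<exists>x\<in>DA. norm (J (A x) - scaleC l x - w) < e" using xD by blast
    qed
    have dir2: "(\<forall>w\<in>range Pp. \<forall>e>0. \<exists>x\<in>Dp. norm (M.S x - scaleC l x - w) < e)"
      if dA: "\<forall>w\<in>UNIV. \<forall>e>0. \<exists>x\<in>DA. norm (J (A x) - scaleC l x - w) < e"
    proof (intro ballI allI impI)
      fix f0 :: 'a and e :: real assume f0: "f0 \<in> range Pp" and e: "e > 0"
      define K where "K = \<bar>C\<bar> + 1"
      have K: "K > 0" unfolding K_def by simp
      have "e / K > 0" using e K by simp
      then obtain x where xD: "x \<in> DA" and xn: "norm (J (A x) - scaleC l x - f0) < e / K"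
        using dA by blast
      obtain xp g where xp: "xp \<in> Dp" and g: "g \<in> range Pm"
        and xe: "x = xp - resolvent Dm (\<lambda>z. Pm (A z)) \<mu> (Pm (A xp)) - resolvent Dm (\<lambda>z. Pm (A z)) \<mu> g"
        by (rule M.decomp_b[OF xD])
      define Gg where "Gg = Pp (A (resolvent Dm (\<lambda>z. Pm (A z)) \<mu> g))"
      have JA: "J (A x) - scaleC l x = (M.S xp - scaleC l xp) - Gg + g"
        unfolding xe l_def Gg_def by (rule M.decomp_a(2)[OF xp g])
      define P where "P = M.S xp - scaleC l xp - Gg - f0"
      have xpP: "xp \<in> range Pp" using xp Dp_sub by blast
      have Prng: "P \<in> range Pp" unfolding P_def Gg_def
        using M.S_rng f0 csubspace_scaleC[OF rngPp_csub xpP, of l]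
        by (intro csubspace_diff[OF rngPp_csub]) auto
      have E: "J (A x) - scaleC l x - f0 = P + g" unfolding JA P_def by (simp add: algebra_simps)
      have "cinner P g = 0" using Prng g orth_pm[of g P] Pp_range by simp
      note py = pythag_le[OF this]
      have nP: "norm P < e / K" using py(1) xn unfolding E by linarith
      have ng: "norm g < e / K" using py(2) xn unfolding E by linarith
      have "norm Gg \<le> C * norm g" using C g unfolding Gg_def Geq by blast
      also have "\<dots> \<le> \<bar>C\<bar> * norm g" by (simp add: mult_right_mono)
      finally have nG: "norm Gg \<le> \<bar>C\<bar> * norm g" .
      have "M.S xp - scaleC l xp - f0 = P + Gg" unfolding P_def by (simp add: algebra_simps)
      hence "norm (M.S xp - scaleC l xp - f0) \<le> norm P + norm Gg" by (simp add: norm_triangle_ineq)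
      also have "\<dots> \<le> norm P + \<bar>C\<bar> * norm g" using nG by simp
      also have "\<dots> \<le> norm P + \<bar>C\<bar> * (e / K)"
        using mult_left_mono[OF less_imp_le[OF ng], of "\<bar>C\<bar>"] by simp
      also have "\<dots> < e / K + \<bar>C\<bar> * (e / K)" using nP by simp
      also have "\<dots> = (1 + \<bar>C\<bar>) * (e / K)" by (simp only: distrib_right mult_1)
      also have "\<dots> = K * (e / K)" unfolding K_def by (simp only: add.commute)
      also have "\<dots> = e" using K by simp
      finally show "\<exists>x\<in>Dp. norm (M.S x - scaleC l x - f0) < e" using xp by blast
    qed
    show "m_dissipative_in (range Pp) (closure (graph Dp (S \<mu>)))
                \<longleftrightarrow> m_dissipative_in UNIV {(x, J y) | x y. (x, y) \<in> closure (graph DA A)}"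
      unfolding LHS RHS using dir1 dir2 by blast
  qed
  show ?thesis using P1 P2 P3 by blast
qed

end
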